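(* Under the hypotheses of the setting below (restriction $r=(\sigma^{\mathrm{ASY}}+\delta)\mathbf 1$ with $\delta>0$, Assumptions A, B, C), let $\epsilon_i>0$, $i=1,\dots,N$, be arbitrary. Then there exists a finite time $T_\delta>0$ such that for all $t\ge T_\delta$, $$\sum_{i=1}^Nc_i^\top x_i^t-J^{\mathrm{MILP}}\le\sum_{i=1}^N\big(c_i^\top x_i^t-J_i^{\mathrm{LP},t}\big)+\sum_{i=1}^N\|\mu_i^t\|_1\epsilon_i+\Gamma(\sigma^{\mathrm{ASY}}+\delta),$$ where $\Gamma=\frac{1}{\zeta_{\hat z}}\sum_{i=1}^N\big(\max_{x_i\in X_i}c_i^\top x_i-\min_{x_i\in X_i}c_i^\top x_i\big)$, $J^{\mathrm{MILP}}$ is the optimal cost of the MILP, and $J_i^{\mathrm{LP},t}=c_i^\top z_i^t+Mv_i^t$ is the optimal cost of (P1) at time $t$.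
   Context: Data: for each $i\in\{1,\dots,N\}$, $c_i\in\mathbb{R}^{n_i}$, $A_i\in\mathbb{R}^{S\times n_i}$ (rows $A_i^s$), nonempty compact $X_i=\{x_i\in\mathbb{Z}^{Z_i}\times\mathbb{R}^{R_i}:D_ix_i\preceq d_i\}$; $b\in\mathbb{R}^S$ with components $b_s$. $\preceq$ is componentwise, $\mathbf 1$ the all-ones vector. MILP: minimize $\sum_ic_i^\top x_i$ s.t. $\sum_iA_ix_i\preceq b$, $x_i\in X_i$ (assumed feasible). Restricted LP (LP$_r$): minimize $\sum_ic_i^\top z_i$ s.t. $\sum_iA_iz_i\preceq b-r$, $z_i\in\mathrm{conv}(X_i)$. Restriction: $L_i^s=\min_{x_i\in X_i}A_i^sx_i$; $(x_i^L,\tilde\ell_i)$ optimal for minimize $\ell_i$ over $x_i\in X_i,\ell_i\in\mathbb{R}$ s.t. $A_ix_i-L_i\preceq\ell_i\mathbf 1$; $\sigma^{\mathrm{ASY}}=(S+1)\max_i\max_s(A_i^sx_i^L-L_i^s)$; here $r=(\sigma^{\mathrm{ASY}}+\delta)\mathbf 1$ for a fixed $\delta>0$. Assumption A: (LP$_r$) is feasible with unique optimal solution. Assumption B: step-sizes $\alpha^t\ge0$, $\sum_t\alpha^t=\infty$, $\sum_t(\alpha^t)^2<\infty$. Assumption C (Slater): there exist $\hat z_i\in\mathrm{conv}(X_i)$ with $\zeta_{\hat z}:=\min_s\big(b_s-r_s-\sum_iA_i^s\hat z_i\big)>0$. Algorithm over a connected undirected graph with neighbor sets $\mathcal N_i$,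 parameter $M>0$ sufficiently large, initialization $\sum_iy_i^0=b-r$. At each $t$, agent $i$: (P1) computes a primal-dual optimal pair $((z_i^t,v_i^t),\mu_i^t)$ of: minimize $c_i^\top z_i+Mv_i$ over $z_i\in\mathrm{conv}(X_i)$, $v_i\ge0$, s.t. $A_iz_i\preceq y_i^t+v_i\mathbf 1$ ($\mu_i^t$ the multiplier of this constraint); (P2) $y_i^{t+1}=y_i^t+\alpha^t\sum_{j\in\mathcal N_i}(\mu_i^t-\mu_j^t)$; (P3) computes $x_i^t$ via: minimize lexicographically $(\rho_i,\xi_i)$ over $x_i\in X_i,\rho_i\ge0,\xi_i$ s.t. $c_i^\top x_i\le\xi_i$, $A_ix_i\preceq y_i^t+\rho_i\mathbf 1$ (first minimize $\rho_i$, then $c_i^\top x_i$ with $\rho_i$ fixed at its minimum). *)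

theory Defs
  imports "HOL-Analysis.Analysis"
begin

text \<open>Vectors of R^n are represented as functions nat => real (only the first n
coordinates matter); a matrix with rows indexed by s is nat => nat => real
(row s, column k).\<close>

definition lin :: "nat \<Rightarrow> (nat \<Rightarrow> real) \<Rightarrow> (nat \<Rightarrow> real) \<Rightarrow> real" where
  "lin n a x = (\<Sum>k<n. a k * x k)"

definition Xset :: "nat \<Rightarrow> nat \<Rightarrow> (nat \<Rightarrow> nat \<Rightarrow> real) \<Rightarrow> (nat \<Rightarrow> real) \<Rightarrow> nat
     \<Rightarrow> (nat \<Rightarrow> real) set" where
  "Xset n Zc D d m = {x. (\<forall>k\<ge>n. x k = 0) \<and> (\<forall>k<Zc. x k \<in> \<int>)
                        \<and> (\<forall>q<m. lin n (D q) x \<le> d q)}"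

definition convh :: "(nat \<Rightarrow> real) set \<Rightarrow> (nat \<Rightarrow> real) set" where
  "convh P = {y. \<exists>(K::nat) p w. (\<forall>j<K. p j \<in> P \<and> w j \<ge> 0) \<and> (\<Sum>j<K. w j) = 1
                  \<and> y = (\<lambda>k. \<Sum>j<K. w j * p j k)}"

text \<open>Problem (P1) of one agent: minimize c'z + M v over z in conv X, v >= 0,
  s.t. A z <= y + v 1 (S rows).\<close>
definition P1_feas :: "nat \<Rightarrow> nat \<Rightarrow> (nat \<Rightarrow> nat \<Rightarrow> real) \<Rightarrow> (nat \<Rightarrow> real) set
     \<Rightarrow> (nat \<Rightarrow> real) \<Rightarrow> (nat \<Rightarrow> real) \<Rightarrow> real \<Rightarrow> bool" where
  "P1_feas n S A X y z v \<longleftrightarrow> z \<in> convh X \<and> v \<ge> 0 \<and> (\<forall>s<S. lin n (A s) z \<le> y s + v)"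

definition P1_lagr :: "nat \<Rightarrow> nat \<Rightarrow> (nat \<Rightarrow> real) \<Rightarrow> (nat \<Rightarrow> nat \<Rightarrow> real) \<Rightarrow> real
     \<Rightarrow> (nat \<Rightarrow> real) \<Rightarrow> (nat \<Rightarrow> real) \<Rightarrow> real \<Rightarrow> (nat \<Rightarrow> real) \<Rightarrow> real" where
  "P1_lagr n S c A M y z v \<mu> =
     lin n c z + M * v + (\<Sum>s<S. \<mu> s * (lin n (A s) z - y s - v))"

text \<open>Dual function (value in ereal, may be -infinity).\<close>
definition P1_dual :: "nat \<Rightarrow> nat \<Rightarrow> (nat \<Rightarrow> real) \<Rightarrow> (nat \<Rightarrow> nat \<Rightarrow> real) \<Rightarrow> real
     \<Rightarrow> (nat \<Rightarrow> real) set \<Rightarrow> (nat \<Rightarrow> real) \<Rightarrow> (nat \<Rightarrow> real) \<Rightarrow> ereal" where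
  "P1_dual n S c A M X y \<mu> =
     (INF zv \<in> convh X \<times> {0..}. ereal (P1_lagr n S c A M y (fst zv) (snd zv) \<mu>))"

definition P1_pd_opt :: "nat \<Rightarrow> nat \<Rightarrow> (nat \<Rightarrow> real) \<Rightarrow> (nat \<Rightarrow> nat \<Rightarrow> real) \<Rightarrow> real
     \<Rightarrow> (nat \<Rightarrow> real) set \<Rightarrow> (nat \<Rightarrow> real) \<Rightarrow> (nat \<Rightarrow> real) \<Rightarrow> real \<Rightarrow> (nat \<Rightarrow> real) \<Rightarrow> bool" where
  "P1_pd_opt n S c A M X y z v \<mu> \<longleftrightarrow>
     P1_feas n S A X y z v \<and>
     (\<forall>z' v'. P1_feas n S A X y z' v' \<longrightarrow> lin n c z + M * v \<le> lin n c z' + M * v') \<and>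
     (\<forall>s<S. \<mu> s \<ge> 0) \<and>
     (\<forall>\<mu>'. (\<forall>s<S. \<mu>' s \<ge> 0) \<longrightarrow> P1_dual n S c A M X y \<mu>' \<le> P1_dual n S c A M X y \<mu>)"

text \<open>Problem (P3): x is a lexicographic minimizer of (rho, c'x) over x in X, rho >= 0,
  A x <= y + rho 1.\<close>
definition P3_lexopt :: "nat \<Rightarrow> nat \<Rightarrow> (nat \<Rightarrow> real) \<Rightarrow> (nat \<Rightarrow> nat \<Rightarrow> real)
     \<Rightarrow> (nat \<Rightarrow> real) set \<Rightarrow> (nat \<Rightarrow> real) \<Rightarrow> (nat \<Rightarrow> real) \<Rightarrow> bool" where
  "P3_lexopt n S c A X y x \<longleftrightarrow> x \<in> X \<and>
     (\<exists>\<rho>\<ge>0. (\<forall>s<S. lin n (A s) x \<le> y s + \<rho>) \<and>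
        (\<forall>x'\<in>X. \<forall>\<rho>'\<ge>0. (\<forall>s<S. lin n (A s) x' \<le> y s + \<rho>') \<longrightarrow> \<rho> \<le> \<rho>') \<and>
        (\<forall>x'\<in>X. (\<forall>s<S. lin n (A s) x' \<le> y s + \<rho>) \<longrightarrow> lin n c x \<le> lin n c x'))"

definition conn_graph :: "nat \<Rightarrow> (nat \<Rightarrow> nat set) \<Rightarrow> bool" where
  "conn_graph N Nb \<longleftrightarrow> (\<forall>i<N. Nb i \<subseteq> {..<N} \<and> i \<notin> Nb i) \<and>
     (\<forall>i<N. \<forall>j<N. j \<in> Nb i \<longleftrightarrow> i \<in> Nb j) \<and>
     (\<forall>i<N. \<forall>j<N. (i, j) \<in> {(i, j). i < N \<and> j \<in> Nb i}\<^sup>*)"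

text \<open>A run of the distributed algorithm with restriction vector r 1 (r scalar),
  penalty M, step-sizes alpha: y t i, z t i, v t i, mu t i, x t i.\<close>
definition alg_run :: "nat \<Rightarrow> nat \<Rightarrow> (nat \<Rightarrow> nat) \<Rightarrow> (nat \<Rightarrow> nat \<Rightarrow> real)
     \<Rightarrow> (nat \<Rightarrow> nat \<Rightarrow> nat \<Rightarrow> real) \<Rightarrow> (nat \<Rightarrow> real) \<Rightarrow> (nat \<Rightarrow> (nat \<Rightarrow> real) set)
     \<Rightarrow> (nat \<Rightarrow> nat set) \<Rightarrow> real \<Rightarrow> (nat \<Rightarrow> real) \<Rightarrow> real
     \<Rightarrow> (nat \<Rightarrow> nat \<Rightarrow> nat \<Rightarrow> real) \<Rightarrow> (nat \<Rightarrow> nat \<Rightarrow> nat \<Rightarrow> real) \<Rightarrow> (nat \<Rightarrow> nat \<Rightarrow> real)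
     \<Rightarrow> (nat \<Rightarrow> nat \<Rightarrow> nat \<Rightarrow> real) \<Rightarrow> (nat \<Rightarrow> nat \<Rightarrow> nat \<Rightarrow> real) \<Rightarrow> bool" where
  "alg_run N S n c A b X Nb r \<alpha> M y z v \<mu> x \<longleftrightarrow>
     (\<forall>s<S. (\<Sum>i<N. y 0 i s) = b s - r) \<and>
     (\<forall>t. \<forall>i<N. P1_pd_opt (n i) S (c i) (A i) M (X i) (y t i) (z t i) (v t i) (\<mu> t i)) \<and>
     (\<forall>t. \<forall>i<N. \<forall>s. y (Suc t) i s = y t i s + \<alpha> t * (\<Sum>j\<in>Nb i. \<mu> t i s - \<mu> t j s)) \<and>
     (\<forall>t. \<forall>i<N. P3_lexopt (n i) S (c i) (A i) (X i) (y t i) (x t i))"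

definition J_MILP :: "nat \<Rightarrow> nat \<Rightarrow> (nat \<Rightarrow> nat) \<Rightarrow> (nat \<Rightarrow> nat \<Rightarrow> real)
     \<Rightarrow> (nat \<Rightarrow> nat \<Rightarrow> nat \<Rightarrow> real) \<Rightarrow> (nat \<Rightarrow> real) \<Rightarrow> (nat \<Rightarrow> (nat \<Rightarrow> real) set) \<Rightarrow> real" where
  "J_MILP N S n c A b X = Inf {\<Sum>i<N. lin (n i) (c i) (xs i) | xs.
      (\<forall>i<N. xs i \<in> X i) \<and> (\<forall>s<S. (\<Sum>i<N. lin (n i) (A i s) (xs i)) \<le> b s)}"

definition LPr_opt :: "nat \<Rightarrow> nat \<Rightarrow> (nat \<Rightarrow> nat) \<Rightarrow> (nat \<Rightarrow> nat \<Rightarrow> real)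
     \<Rightarrow> (nat \<Rightarrow> nat \<Rightarrow> nat \<Rightarrow> real) \<Rightarrow> (nat \<Rightarrow> real) \<Rightarrow> (nat \<Rightarrow> (nat \<Rightarrow> real) set) \<Rightarrow> real
     \<Rightarrow> (nat \<Rightarrow> nat \<Rightarrow> real) \<Rightarrow> bool" where
  "LPr_opt N S n c A b X r zs \<longleftrightarrow>
     (let feas = (\<lambda>zs. (\<forall>i<N. zs i \<in> convh (X i)) \<and>
                       (\<forall>s<S. (\<Sum>i<N. lin (n i) (A i s) (zs i)) \<le> b s - r))
      in feas zs \<and> (\<forall>zs'. feas zs' \<longrightarrow> (\<Sum>i<N. lin (n i) (c i) (zs i)) \<le> (\<Sum>i<N. lin (n i) (c i) (zs' i))))"

definition Lmin :: "nat \<Rightarrow> (nat \<Rightarrow> real) \<Rightarrow> (nat \<Rightarrow> real) set \<Rightarrow> real" where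
  "Lmin n a X = Inf ((\<lambda>x. lin n a x) ` X)"

definition xL_opt :: "nat \<Rightarrow> nat \<Rightarrow> (nat \<Rightarrow> nat \<Rightarrow> real) \<Rightarrow> (nat \<Rightarrow> real) set
     \<Rightarrow> (nat \<Rightarrow> real) \<Rightarrow> real \<Rightarrow> bool" where
  "xL_opt n S A X xL l \<longleftrightarrow> xL \<in> X \<and> (\<forall>s<S. lin n (A s) xL - Lmin n (A s) X \<le> l) \<and>
     (\<forall>x\<in>X. \<forall>l'. (\<forall>s<S. lin n (A s) x - Lmin n (A s) X \<le> l') \<longrightarrow> l \<le> l')"

definition sigma_ASY :: "nat \<Rightarrow> nat \<Rightarrow> (nat \<Rightarrow> nat) \<Rightarrow> (nat \<Rightarrow> nat \<Rightarrow> nat \<Rightarrow> real)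
     \<Rightarrow> (nat \<Rightarrow> (nat \<Rightarrow> real) set) \<Rightarrow> (nat \<Rightarrow> nat \<Rightarrow> real) \<Rightarrow> real" where
  "sigma_ASY N S n A X xL = (real S + 1) *
     Max {lin (n i) (A i s) (xL i) - Lmin (n i) (A i s) (X i) | i s. i < N \<and> s < S}"

definition zeta :: "nat \<Rightarrow> nat \<Rightarrow> (nat \<Rightarrow> nat) \<Rightarrow> (nat \<Rightarrow> nat \<Rightarrow> nat \<Rightarrow> real) \<Rightarrow> (nat \<Rightarrow> real)
     \<Rightarrow> real \<Rightarrow> (nat \<Rightarrow> nat \<Rightarrow> real) \<Rightarrow> real" where
  "zeta N S n A b r zh = Min {b s - r - (\<Sum>i<N. lin (n i) (A i s) (zh i)) | s. s < S}"

definition Gamma_bound :: "nat \<Rightarrow> (nat \<Rightarrow> nat) \<Rightarrow> (nat \<Rightarrow> nat \<Rightarrow> real) \<Rightarrow> (nat \<Rightarrow> (nat \<Rightarrow> real) set)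
     \<Rightarrow> real \<Rightarrow> real" where
  "Gamma_bound N n c X \<zeta> = (1 / \<zeta>) *
     (\<Sum>i<N. Sup ((\<lambda>x. lin (n i) (c i) x) ` X i) - Inf ((\<lambda>x. lin (n i) (c i) x) ` X i))"

end

theory Submission
  imports Defs
begin


lemma kron_conn_step:
  fixes a :: "nat \<Rightarrow> nat \<Rightarrow> real"
  assumes sym: "\<And>i j. a i j = a j i" and nn: "\<And>i j. a i j \<ge> 0"
    and d: "d = (\<Sum>j<n. a n j)" and dpos: "d > 0"
  defines "R \<equiv> {(i,j). i<Suc n \<and> j<Suc n \<and> i\<noteq>j \<and> a i j > 0}"
    and "R' \<equiv> {(i,j). i<n \<and> j<n \<and> i\<noteq>j \<and> a i j + a i n * a n j / d > 0}"
  assumes xy: "(x,y) \<in> R\<^sup>*" and x: "x < n"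
  shows "(y<n \<longrightarrow> (x,y)\<in>R'\<^sup>*) \<and> (y=n \<longrightarrow> (\<exists>u<n. (x,u)\<in>R'\<^sup>* \<and> a u n > 0))"
  using xy
proof (induction rule: rtrancl_induct)
  case base
  then show ?case using x by auto
next
  case (step y z)
  have yz: "y < Suc n" "z < Suc n" "y \<noteq> z" "a y z > 0" using step(2) unfolding R_def by auto
  have nnp: "a i n * a n j / d \<ge> 0" for i j using nn dpos by (simp add: mult_nonneg_nonneg)
  show ?case
  proof (cases "y < n")
    case True
    then have IH: "(x,y)\<in>R'\<^sup>*" using step(3) by auto
    show ?thesis
    proof (cases "z < n")
      case True
      have "(y,z) \<in> R'" unfolding R'_def using yz \<open>y<n\<close> True nnp[of y z] by auto
      then show ?thesis using IH True by auto
    next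
      case False
      then have "z = n" using yz by auto
      then show ?thesis using IH \<open>y<n\<close> yz by (intro conjI impI; (intro exI[of _ y])?) auto
    qed
  next
    case False
    then have yn: "y = n" using yz by auto
    then obtain u where u: "u<n" "(x,u)\<in>R'\<^sup>*" "a u n > 0" using step(3) by auto
    have zn: "z < n" using yz yn by auto
    have anz: "a n z > 0" using yz yn by auto
    show ?thesis
    proof (cases "u = z")
      case True then show ?thesis using u zn by auto
    next
      case False
      have "a u n * a n z / d > 0" using u(3) anz dpos by simp
      then have "(u,z) \<in> R'" unfolding R'_def using u(1) zn False nn[of u z] by auto
      then show ?thesis using u zn by (meson rtrancl.rtrancl_into_rtrancl)
    qed
  qed
qed

lemma kron:
  fixes a :: "nat \<Rightarrow> nat \<Rightarrow> real"
  shows "(\<forall>i j. a i j = a j i) \<Longrightarrow> (\<forall>i j. a i j \<ge> 0) \<Longrightarrow>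
    (\<forall>i<n. \<forall>j<n. (i,j) \<in> {(i,j). i<n \<and> j<n \<and> i\<noteq>j \<and> a i j > 0}\<^sup>*) \<Longrightarrow>
    (\<Sum>i<n. e i) = 0 \<Longrightarrow> \<exists>w. \<forall>i<n. (\<Sum>j<n. a i j * (w i - w j)) = e i"
proof (induction n arbitrary: a e)
  case 0
  then show ?case by auto
next
  case (Suc n)
  note sym = Suc.prems(1) and nn = Suc.prems(2) and conn = Suc.prems(3) and esum = Suc.prems(4)
  show ?case
  proof (cases "n = 0")
    case True
    then show ?thesis using esum by (intro exI[of _ "\<lambda>_. 0"]) auto
  next
    case False
    define d where "d = (\<Sum>j<n. a n j)"
    have "(n,0) \<in> {(i,j). i<Suc n \<and> j<Suc n \<and> i\<noteq>j \<and> a i j > 0}\<^sup>*" using conn False by auto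
    then obtain u where u: "(n,u) \<in> {(i,j). i<Suc n \<and> j<Suc n \<and> i\<noteq>j \<and> a i j > 0}"
      using False by (cases rule: converse_rtranclE) auto
    have un: "u < n" "a n u > 0" using u by auto
    have dpos: "d > 0"
    proof -
      have "a n u \<le> d" unfolding d_def
        by (rule member_le_sum) (use un nn in auto)
      then show ?thesis using un by linarith
    qed
    define a' where "a' i j = a i j + a i n * a n j / d" for i j
    define e' where "e' i = e i + a i n * e n / d" for i
    have sym': "\<forall>i j. a' i j = a' j i" unfolding a'_def using sym by (auto simp: mult.commute)
    have nn': "\<forall>i j. a' i j \<ge> 0" unfolding a'_def using nn dpos
      by (auto intro!: add_nonneg_nonneg divide_nonneg_pos mult_nonneg_nonneg)
    have conn': "\<forall>i<n. \<forall>j<n. (i,j) \<in> {(i,j). i<n \<and> j<n \<and> i\<noteq>j \<and> a' i j > 0}\<^sup>*"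
    proof (intro allI impI)
      fix i j assume ij: "i<n" "j<n"
      have "(i,j) \<in> {(i,j). i<Suc n \<and> j<Suc n \<and> i\<noteq>j \<and> a i j > 0}\<^sup>*" using conn ij by auto
      from kron_conn_step[OF _ _ d_def dpos this ij(1)] sym nn ij(2)
      show "(i,j) \<in> {(i,j). i<n \<and> j<n \<and> i\<noteq>j \<and> a' i j > 0}\<^sup>*" unfolding a'_def by auto
    qed
    have esum': "(\<Sum>i<n. e' i) = 0"
    proof -
      have "(\<Sum>i<n. e' i) = (\<Sum>i<n. e i) + (\<Sum>i<n. a n i) * e n / d"
        unfolding e'_def by (simp add: sum.distrib sum_divide_distrib sum_distrib_right sym)
      also have "\<dots> = (\<Sum>i<n. e i) + e n" using dpos d_def by simp
      also have "\<dots> = 0" using esum by simp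
      finally show ?thesis .
    qed
    obtain w' where w': "\<forall>i<n. (\<Sum>j<n. a' i j * (w' i - w' j)) = e' i"
      using Suc.IH[OF sym' nn' conn' esum'] by blast
    define wn where "wn = (e n + (\<Sum>j<n. a n j * w' j)) / d"
    define w where "w = w'(n := wn)"
    show ?thesis
    proof (intro exI allI impI)
      fix i assume i: "i < Suc n"
      show "(\<Sum>j<Suc n. a i j * (w i - w j)) = e i"
      proof (cases "i = n")
        case True
        have "(\<Sum>j<Suc n. a i j * (w i - w j)) = (\<Sum>j<n. a n j * (wn - w' j))"
          using True by (simp add: w_def)
        also have "\<dots> = d * wn - (\<Sum>j<n. a n j * w' j)"
          by (simp add: d_def right_diff_distrib sum_subtractf sum_distrib_left mult.commute)
        also have "\<dots> = e n" using dpos by (simp add: wn_def)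
        finally show ?thesis using True by simp
      next
        case False
        then have iln: "i < n" using i by simp
        have s1: "(\<Sum>j<Suc n. a i j * (w i - w j)) = (\<Sum>j<n. a i j * (w' i - w' j)) + a i n * (w' i - wn)"
          using iln by (simp add: w_def)
        have s2: "(\<Sum>j<n. a' i j * (w' i - w' j)) = (\<Sum>j<n. a i j * (w' i - w' j))
             + a i n / d * (d * w' i - (\<Sum>j<n. a n j * w' j))"
        proof -
          have "(\<Sum>j<n. a' i j * (w' i - w' j)) = (\<Sum>j<n. a i j * (w' i - w' j))
             + (\<Sum>j<n. a i n / d * (a n j * (w' i - w' j)))"
            unfolding a'_def by (simp add: distrib_right sum.distrib mult.assoc)
          also have "(\<Sum>j<n. a i n / d * (a n j * (w' i - w' j))) = a i n / d * (\<Sum>j<n. a n j * (w' i - w' j))"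
            by (simp add: sum_distrib_left)
          also have "(\<Sum>j<n. a n j * (w' i - w' j)) = d * w' i - (\<Sum>j<n. a n j * w' j)"
            by (simp add: d_def right_diff_distrib sum_subtractf sum_distrib_left mult.commute)
          finally show ?thesis .
        qed
        have s3: "d * w' i - (\<Sum>j<n. a n j * w' j) = d * w' i - (d * wn - e n)"
          using dpos by (simp add: wn_def)
        have "e i = e' i - a i n * e n / d" by (simp add: e'_def)
        also have "\<dots> = (\<Sum>j<n. a i j * (w' i - w' j)) + a i n / d * (d * w' i - (d * wn - e n)) - a i n * e n / d"
          using w' iln s2 s3 by simp
        also have "\<dots> = (\<Sum>j<n. a i j * (w' i - w' j)) + a i n * (w' i - wn)"
          using dpos by (simp add: field_simps)
        finally show ?thesis using s1 by simp
      qed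
    qed
  qed
qed



definition cvx :: "(nat\<Rightarrow>real) set \<Rightarrow> bool" where
  "cvx C \<longleftrightarrow> (\<forall>x\<in>C. \<forall>y\<in>C. \<forall>u::real. 0\<le>u \<and> u\<le>1 \<longrightarrow> (\<lambda>k. (1-u)*x k + u*y k) \<in> C)"
definition aff :: "((nat\<Rightarrow>real) \<Rightarrow> real) \<Rightarrow> bool" where
  "aff f \<longleftrightarrow> (\<forall>x y u. f (\<lambda>k. (1-u)*x k + u*y k) = (1-u)*f x + u*f y)"

lemma two_case_ratio:
  assumes C: "cvx C" and f: "aff f" and g: "aff g"
    and pos: "\<forall>x\<in>C. f x > 0 \<or> g x > 0"
    and x: "x \<in> C" "g x < 0" and y: "y \<in> C" "f y < 0"
  shows "(- g x) / f x \<le> g y / (- f y)"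
proof (rule ccontr)
  assume H: "\<not> ?thesis"
  have fx: "f x > 0" using pos x by force
  have gy: "g y > 0" using pos y by force
  define a where "a = f x" define b where "b = g x" define c where "c = f y" define d where "d = g y"
  have ab: "a > 0" "b < 0" "c < 0" "d > 0" using fx x gy y by (auto simp: a_def b_def c_def d_def)
  have H': "a * d < b * c"
  proof -
    have "g y / (- f y) < (- g x) / f x" using H by simp
    then have "d / (-c) < (-b) / a" by (simp add: a_def b_def c_def d_def)
    then show ?thesis using ab by (simp add: field_simps)
  qed
  define u where "u = a / (a - c)"
  have u: "0 \<le> u" "u \<le> 1" using ab by (auto simp: u_def field_simps)
  define z where "z = (\<lambda>k. (1-u)*x k + u*y k)"
  have zC: "z \<in> C" using C x y u unfolding cvx_def z_def by blast
  have fz: "f z = (1-u)*a + u*c" using f unfolding aff_def z_def a_def c_def by blast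
  have gz: "g z = (1-u)*b + u*d" using g unfolding aff_def z_def b_def d_def by blast
  have "f z = 0" using fz ab by (simp add: u_def field_simps)
  moreover have "g z < 0"
  proof -
    have amc: "a - c > 0" using ab by simp
    have u1: "1 - u = (-c)/(a-c)" using amc by (simp add: u_def field_simps)
    have "g z = ((-c)/(a-c))*b + (a/(a-c))*d" using gz u1 by (simp add: u_def)
    also have "\<dots> = ((-c)*b + a*d)/(a-c)" by (simp add: add_divide_distrib diff_divide_distrib)
    finally have "g z = ((-c)*b + a*d)/(a-c)" .
    moreover have "(-c)*b + a*d < 0" using H' by (simp add: algebra_simps)
    ultimately show ?thesis using ab by (simp add: divide_neg_pos)
  qed
  ultimately show False using pos zC by force
qed

lemma two_case:
  assumes C: "cvx C" and f: "aff f" and g: "aff g"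
    and pos: "\<forall>x\<in>C. f x > 0 \<or> g x > 0"
  shows "\<exists>t. 0\<le>t \<and> t\<le>1 \<and> (\<forall>x\<in>C. t * f x + (1-t) * g x \<ge> 0)"
proof (cases "\<exists>x\<in>C. g x < 0")
  case False
  then show ?thesis by (intro exI[of _ 0]) (auto simp: not_less)
next
  case True
  then obtain x0 where x0: "x0\<in>C" "g x0 < 0" by blast
  show ?thesis
  proof (cases "\<exists>y\<in>C. f y < 0")
    case False
    then show ?thesis by (intro exI[of _ 1]) (auto simp: not_less)
  next
    case True
    then obtain y0 where y0: "y0\<in>C" "f y0 < 0" by blast
    define R1 where "R1 = {(- g x) / f x | x. x\<in>C \<and> g x < 0}"
    define \<rho> where "\<rho> = Sup R1"
    have ne: "R1 \<noteq> {}" using x0 unfolding R1_def by blast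
    have ub: "\<And>r y. r \<in> R1 \<Longrightarrow> y \<in> C \<Longrightarrow> f y < 0 \<Longrightarrow> r \<le> g y / (- f y)"
      unfolding R1_def using two_case_ratio[OF C f g pos] by blast
    have bdd: "bdd_above R1" by (rule bdd_aboveI[of _ "g y0 / (- f y0)"]) (use ub y0 in auto)
    have rho_le: "\<And>y. y \<in> C \<Longrightarrow> f y < 0 \<Longrightarrow> \<rho> \<le> g y / (- f y)"
      unfolding \<rho>_def using ub ne by (meson cSup_least)
    have rho_ge: "\<And>x. x \<in> C \<Longrightarrow> g x < 0 \<Longrightarrow> (- g x) / f x \<le> \<rho>"
      unfolding \<rho>_def R1_def using bdd R1_def by (auto intro!: cSup_upper)
    have fx0: "f x0 > 0" using pos x0 by force
    have rpos: "\<rho> \<ge> 0"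
    proof -
      have "(- g x0) / f x0 > 0" using fx0 x0 by (simp add: divide_neg_pos)
      then show ?thesis using rho_ge[OF x0] by linarith
    qed
    have key: "\<rho> * f x + g x \<ge> 0" if xC: "x \<in> C" for x
    proof -
      consider "g x < 0" | "f x < 0" | "g x \<ge> 0" "f x \<ge> 0" by linarith
      then show ?thesis
      proof cases
        case 1
        have fx: "f x > 0" using pos xC 1 by force
        have "(- g x) / f x \<le> \<rho>" using rho_ge xC 1 by blast
        then show ?thesis using fx by (simp add: field_simps)
      next
        case 2
        have "\<rho> \<le> g x / (- f x)" using rho_le xC 2 by blast
        then show ?thesis using 2 by (simp add: field_simps)
      next
        case 3
        then show ?thesis using rpos by simp
      qed
    qed
    show ?thesis
    proof (intro exI[of _ "\<rho> / (1+\<rho>)"] conjI ballI)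
      show "0 \<le> \<rho> / (1+\<rho>)" using rpos by simp
      show "\<rho> / (1+\<rho>) \<le> 1" using rpos by simp
      fix x assume "x \<in> C"
      have "\<rho> / (1 + \<rho>) * f x + (1 - \<rho> / (1 + \<rho>)) * g x = (\<rho> * f x + g x) / (1+\<rho>)"
      proof -
        have "1 - \<rho> / (1 + \<rho>) = 1 / (1+\<rho>)" using rpos by (simp add: field_simps)
        then show ?thesis by (simp add: add_divide_distrib)
      qed
      then show "0 \<le> \<rho> / (1 + \<rho>) * f x + (1 - \<rho> / (1 + \<rho>)) * g x"
        using key[OF \<open>x\<in>C\<close>] rpos by simp
    qed
  qed
qed



lemma aff_comb:
  fixes m :: nat
  assumes "\<forall>k. aff (f k)"
  shows "aff (\<lambda>x. (\<Sum>k<m. p k * f k x) + e)"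
  unfolding aff_def
proof (intro allI)
  fix x y u
  have fk: "\<And>k. f k (\<lambda>k. (1 - u) * x k + u * y k) = (1-u) * f k x + u * f k y"
    using assms unfolding aff_def by blast
  have "(\<Sum>k<m. p k * f k (\<lambda>k. (1 - u) * x k + u * y k)) = (\<Sum>k<m. (1-u) * (p k * f k x) + u * (p k * f k y))"
    by (intro sum.cong refl, subst fk) (simp add: algebra_simps)
  also have "\<dots> = (1-u) * (\<Sum>k<m. p k * f k x) + u * (\<Sum>k<m. p k * f k y)"
    by (simp add: sum.distrib sum_distrib_left)
  finally show "(\<Sum>k<m. p k * f k (\<lambda>k. (1 - u) * x k + u * y k)) + e =
       (1 - u) * ((\<Sum>k<m. p k * f k x) + e) + u * ((\<Sum>k<m. p k * f k y) + e)"
    by (simp add: algebra_simps)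
qed

lemma gordan:
  "cvx C \<Longrightarrow> C \<noteq> {} \<Longrightarrow> (\<forall>k. aff (f k)) \<Longrightarrow> (\<forall>x\<in>C. \<exists>k<(m::nat). f k x > 0) \<Longrightarrow> \<epsilon> > 0 \<Longrightarrow>
   \<exists>p. (\<forall>k<m. p k \<ge> 0) \<and> (\<Sum>k<m. p k) = 1 \<and> (\<forall>x\<in>C. (\<Sum>k<m. p k * f k x) \<ge> -\<epsilon>)"
proof (induction m arbitrary: C \<epsilon>)
  case 0
  then show ?case by auto
next
  case (Suc m)
  note C = Suc.prems(1) and ne = Suc.prems(2) and affs = Suc.prems(3) and pos = Suc.prems(4)
    and eps = Suc.prems(5)
  define C' where "C' = {x\<in>C. f m x \<le> 0}"
  show ?case
  proof (cases "C' = {}")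
    case True
    show ?thesis
    proof (intro exI[of _ "\<lambda>k. if k = m then 1 else 0"] conjI ballI allI impI)
      show "(\<Sum>k<Suc m. if k = m then 1 else (0::real)) = 1" by simp
      fix x assume "x \<in> C"
      then have "f m x > 0" using True unfolding C'_def by auto
      then show "- \<epsilon> \<le> (\<Sum>k<Suc m. (if k = m then 1 else 0) * f k x)" using eps by simp
    qed auto
  next
    case False
    have cvx': "cvx C'" unfolding cvx_def C'_def
    proof (intro ballI allI impI)
      fix x y and u :: real
      assume x: "x \<in> {x \<in> C. f m x \<le> 0}" and y: "y \<in> {x \<in> C. f m x \<le> 0}" and u: "0 \<le> u \<and> u \<le> 1"
      have "(\<lambda>k. (1 - u) * x k + u * y k) \<in> C" using C x y u unfolding cvx_def by blast
      moreover have "f m (\<lambda>k. (1 - u) * x k + u * y k) = (1-u) * f m x + u * f m y"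
        using affs unfolding aff_def by blast
      moreover have "(1-u) * f m x + u * f m y \<le> 0" using x y u
        by (simp add: add_nonpos_nonpos mult_nonneg_nonpos)
      ultimately show "(\<lambda>k. (1 - u) * x k + u * y k) \<in> {x \<in> C. f m x \<le> 0}" by simp
    qed
    have pos': "\<forall>x\<in>C'. \<exists>k<m. f k x > 0"
    proof
      fix x assume "x \<in> C'"
      then obtain k where "k < Suc m" "f k x > 0" "f m x \<le> 0" using pos unfolding C'_def by auto
      then show "\<exists>k<m. f k x > 0" by (metis less_Suc_eq not_le)
    qed
    obtain p where p: "\<forall>k<m. p k \<ge> 0" "(\<Sum>k<m. p k) = 1" "\<forall>x\<in>C'. (\<Sum>k<m. p k * f k x) \<ge> -(\<epsilon>/2)"
      using Suc.IH[OF cvx' False affs pos', of "\<epsilon>/2"] eps by auto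
    define g where "g x = (\<Sum>k<m. p k * f k x) + \<epsilon>" for x
    have affg: "aff g" unfolding g_def[abs_def] by (rule aff_comb[OF affs])
    have pos2: "\<forall>x\<in>C. g x > 0 \<or> f m x > 0"
    proof
      fix x assume xC: "x \<in> C"
      show "g x > 0 \<or> f m x > 0"
      proof (cases "f m x \<le> 0")
        case True
        then have "x \<in> C'" using xC unfolding C'_def by auto
        then have "(\<Sum>k<m. p k * f k x) \<ge> -(\<epsilon>/2)" using p(3) by blast
        then show ?thesis using eps unfolding g_def by simp
      qed auto
    qed
    obtain t where t: "0 \<le> t" "t \<le> 1" "\<forall>x\<in>C. t * g x + (1-t) * f m x \<ge> 0"
      using two_case[OF C affg _ pos2] affs by blast
    define p' where "p' k = (if k < m then t * p k else if k = m then 1 - t else 0)" for k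
    show ?thesis
    proof (intro exI[of _ p'] conjI allI impI ballI)
      fix k assume "k < Suc m" then show "0 \<le> p' k" using p(1) t unfolding p'_def by auto
    next
      have "(\<Sum>k<m. p' k) = (\<Sum>k<m. t * p k)" by (rule sum.cong) (auto simp: p'_def)
      then have "(\<Sum>k<Suc m. p' k) = (\<Sum>k<m. t * p k) + (1 - t)"
        by (simp add: p'_def)
      also have "\<dots> = 1" using p(2) by (simp add: sum_distrib_left[symmetric])
      finally show "(\<Sum>k<Suc m. p' k) = 1" .
    next
      fix x assume xC: "x \<in> C"
      have "(\<Sum>k<m. p' k * f k x) = (\<Sum>k<m. t * p k * f k x)" by (rule sum.cong) (auto simp: p'_def)
      then have "(\<Sum>k<Suc m. p' k * f k x) = (\<Sum>k<m. t * p k * f k x) + (1 - t) * f m x"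
        by (simp add: p'_def)
      also have "\<dots> = t * (g x - \<epsilon>) + (1 - t) * f m x"
        unfolding g_def by (simp add: sum_distrib_left mult.assoc)
      also have "\<dots> \<ge> - t * \<epsilon>" using t(3) xC by (simp add: algebra_simps)
      moreover have "t * \<epsilon> \<le> \<epsilon>" using t eps by (simp add: mult_le_cancel_right1)
      ultimately show "- \<epsilon> \<le> (\<Sum>k<Suc m. p' k * f k x)" by linarith
    qed
  qed
qed



lemma sum_split_add: fixes K2 :: nat shows "(\<Sum>j<K1+K2. h j) = (\<Sum>j<K1. h j) + (\<Sum>j<K2. h (K1+j)::real)"
  by (induction K2) (auto simp: add.assoc)

lemma lin_aff: "lin n a (\<lambda>k. (1-u)*x k + u*y k) = (1-u) * lin n a x + u * lin n a y"
proof -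
  have "(\<Sum>k<n. a k * ((1-u)*x k + u*y k)) = (\<Sum>k<n. (1-u)*(a k*x k) + u*(a k*y k))"
    by (intro sum.cong) (simp_all add: algebra_simps)
  then show ?thesis unfolding lin_def by (simp add: sum.distrib sum_distrib_left)
qed

lemma lin_comb: "lin n a (\<lambda>k. \<Sum>j<K. w j * p j k) = (\<Sum>j<K. w j * lin n a (p j))"
  unfolding lin_def by (simp add: sum_distrib_left sum_distrib_right mult.assoc mult.left_commute sum.swap[of _ "{..<n}"])

lemma convh_cvx: "cvx (convh P)"
  unfolding cvx_def
proof (intro ballI allI impI)
  fix x y and u :: real
  assume x: "x \<in> convh P" and y: "y \<in> convh P" and u: "0 \<le> u \<and> u \<le> 1"
  obtain K1 :: nat and p1 w1 where 1: "\<forall>j<K1. p1 j \<in> P \<and> w1 j \<ge> 0" "(\<Sum>j<K1. w1 j) = 1" "x = (\<lambda>k. \<Sum>j<K1. w1 j * p1 j k)"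
    using x unfolding convh_def mem_Collect_eq by blast
  obtain K2 :: nat and p2 w2 where 2: "\<forall>j<K2. p2 j \<in> P \<and> w2 j \<ge> 0" "(\<Sum>j<K2. w2 j) = 1" "y = (\<lambda>k. \<Sum>j<K2. w2 j * p2 j k)"
    using y unfolding convh_def mem_Collect_eq by blast
  define p where "p j = (if j < K1 then p1 j else p2 (j - K1))" for j
  define w where "w j = (if j < K1 then (1-u) * w1 j else u * w2 (j - K1))" for j
  have A: "\<forall>j<K1+K2. p j \<in> P \<and> w j \<ge> 0" using 1 2 u unfolding p_def w_def by auto
  have B: "(\<Sum>j<K1+K2. w j) = 1"
    unfolding sum_split_add using 1(2) 2(2) by (simp add: w_def sum_distrib_left[symmetric])
  have C: "(\<lambda>k. (1-u)*x k + u*y k) = (\<lambda>k. \<Sum>j<K1+K2. w j * p j k)"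
    unfolding sum_split_add 1(3) 2(3) by (simp add: w_def p_def sum_distrib_left mult.assoc)
  show "(\<lambda>k. (1-u)*x k + u*y k) \<in> convh P" unfolding convh_def using A B C by blast
qed

lemma mem_convh: "x \<in> P \<Longrightarrow> x \<in> convh P"
  unfolding convh_def by (rule CollectI, rule exI[of _ 1], rule exI[of _ "\<lambda>_. x"], rule exI[of _ "\<lambda>_. 1"]) auto

lemma lagr_eq: "P1_lagr n S c A M y z v \<mu> =
   lin n c z + (\<Sum>s<S. \<mu> s * (lin n (A s) z - y s)) + v * (M - (\<Sum>s<S. \<mu> s))"
proof -
  have "(\<Sum>s<S. \<mu> s * (lin n (A s) z - y s - v)) = (\<Sum>s<S. \<mu> s * (lin n (A s) z - y s)) - v * (\<Sum>s<S. \<mu> s)"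
    by (simp add: right_diff_distrib sum_subtractf sum_distrib_left mult.commute)
  then show ?thesis unfolding P1_lagr_def by (simp add: algebra_simps)
qed

lemma exists_argmax_nat:
  fixes g :: "nat \<Rightarrow> real"
  assumes "S > 0"
  shows "\<exists>s0<S. \<forall>s<S. g s \<le> g s0"
proof -
  have "finite (g ` {..<S})" "g ` {..<S} \<noteq> {}" using assms by auto
  then have "Max (g ` {..<S}) \<in> g ` {..<S}" by (rule Max_in)
  then obtain s0 where "s0 < S" "g s0 = Max (g ` {..<S})" by auto
  then show ?thesis by (metis Max_ge finite_imageI finite_lessThan imageI lessThan_iff)
qed

lemma P1_approx_dual:
  assumes S: "S > 0" and M: "M \<ge> 0" and pd: "P1_pd_opt n S c A M X y z v \<mu>" and eps: "\<epsilon> > 0"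
  shows "\<exists>lam. (\<forall>s<S. lam s \<ge> 0) \<and> (\<Sum>s<S. lam s) \<le> M \<and>
     (\<forall>x\<in>convh X. lin n c x + (\<Sum>s<S. lam s * (lin n (A s) x - y s)) \<ge> lin n c z + M * v - \<epsilon>)"
proof -
  define J where "J = lin n c z + M * v"
  have opt: "\<And>z' v'. P1_feas n S A X y z' v' \<Longrightarrow> J \<le> lin n c z' + M * v'"
    using pd unfolding P1_pd_opt_def J_def by blast
  have feas: "P1_feas n S A X y z v" using pd unfolding P1_pd_opt_def by blast
  then have ne: "convh X \<noteq> {}" unfolding P1_feas_def by blast
  define f where "f k x = (if k < S then M * (lin n (A k) x - y k) else 0) + lin n c x - J + \<epsilon>/2" for k x
  have affs: "\<forall>k. aff (f k)"
    unfolding aff_def f_def lin_aff by (auto simp: field_simps)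
  have pos: "\<forall>x\<in>convh X. \<exists>k<Suc S. f k x > 0"
  proof
    fix x assume xC: "x \<in> convh X"
    obtain s0 where s0: "s0 < S" "\<forall>s<S. lin n (A s) x - y s \<le> lin n (A s0) x - y s0"
      using exists_argmax_nat[OF S, of "\<lambda>s. lin n (A s) x - y s"] by blast
    show "\<exists>k<Suc S. f k x > 0"
    proof (cases "lin n (A s0) x - y s0 \<le> 0")
      case True
      have "P1_feas n S A X y x 0" unfolding P1_feas_def using xC s0 True by force
      then have "J \<le> lin n c x" using opt by fastforce
      then have "f S x > 0" unfolding f_def using eps by simp
      then show ?thesis by blast
    next
      case False
      have "P1_feas n S A X y x (lin n (A s0) x - y s0)" unfolding P1_feas_def using xC s0 False by force
      then have "J \<le> lin n c x + M * (lin n (A s0) x - y s0)" using opt by fastforce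
      then have "f s0 x > 0" unfolding f_def using eps s0 by simp
      then show ?thesis using s0 less_SucI by blast
    qed
  qed
  obtain p where p: "\<forall>k<Suc S. p k \<ge> 0" "(\<Sum>k<Suc S. p k) = 1"
      "\<forall>x\<in>convh X. (\<Sum>k<Suc S. p k * f k x) \<ge> -(\<epsilon>/2)"
    using gordan[OF convh_cvx ne affs pos, of "\<epsilon>/2"] eps by auto
  define lam where "lam s = M * p s" for s
  show ?thesis
  proof (intro exI[of _ lam] conjI allI impI ballI)
    fix s assume "s < S" then show "lam s \<ge> 0" using p(1) M unfolding lam_def by simp
  next
    have "(\<Sum>s<S. lam s) = M * (\<Sum>s<S. p s)" unfolding lam_def by (simp add: sum_distrib_left)
    also have "(\<Sum>s<S. p s) = 1 - p S" using p(2) by simp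
    finally have "(\<Sum>s<S. lam s) = M - M * p S" by (simp add: algebra_simps)
    moreover have "M * p S \<ge> 0" using p(1) M by simp
    ultimately show "(\<Sum>s<S. lam s) \<le> M" by linarith
  next
    fix x assume xC: "x \<in> convh X"
    have "(\<Sum>k<Suc S. p k * f k x) = (\<Sum>k<Suc S. p k * (if k < S then M * (lin n (A k) x - y k) else 0))
        + (\<Sum>k<Suc S. p k) * (lin n c x - J + \<epsilon>/2)"
    proof -
      have "(\<Sum>k<Suc S. p k * f k x) = (\<Sum>k<Suc S. p k * (if k < S then M * (lin n (A k) x - y k) else 0)
            + p k * (lin n c x - J + \<epsilon>/2))"
        unfolding f_def by (intro sum.cong) (simp_all add: algebra_simps)
      then show ?thesis by (simp only: sum.distrib sum_distrib_right[symmetric])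
    qed
    also have "(\<Sum>k<Suc S. p k * (if k < S then M * (lin n (A k) x - y k) else 0))
        = (\<Sum>s<S. lam s * (lin n (A s) x - y s))"
      unfolding lam_def by (simp add: mult.assoc mult.left_commute)
    finally have "(\<Sum>k<Suc S. p k * f k x) = (\<Sum>s<S. lam s * (lin n (A s) x - y s)) + (lin n c x - J + \<epsilon>/2)"
      using p(2) by simp
    then show "lin n c x + (\<Sum>s<S. lam s * (lin n (A s) x - y s)) \<ge> lin n c z + M * v - \<epsilon>"
      using p(3) xC unfolding J_def by fastforce
  qed
qed



lemma P1_lagr_bound:
  assumes S: "S > 0" and M: "M \<ge> 0" and pd: "P1_pd_opt n S c A M X y z v \<mu>"
    and x: "x \<in> convh X" and w: "w \<ge> 0"
  shows "P1_lagr n S c A M y x w \<mu> \<ge> lin n c z + M * v"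
proof (rule field_le_epsilon)
  fix \<epsilon> :: real assume eps: "\<epsilon> > 0"
  obtain lam where lam: "\<forall>s<S. lam s \<ge> 0" "(\<Sum>s<S. lam s) \<le> M"
     "\<forall>x\<in>convh X. lin n c x + (\<Sum>s<S. lam s * (lin n (A s) x - y s)) \<ge> lin n c z + M * v - \<epsilon>"
    using P1_approx_dual[OF S M pd eps] by blast
  have "ereal (lin n c z + M * v - \<epsilon>) \<le> P1_dual n S c A M X y lam"
    unfolding P1_dual_def
  proof (rule INF_greatest)
    fix zv :: "(nat \<Rightarrow> real) \<times> real" assume zv: "zv \<in> convh X \<times> {0..}"
    have "lin n c (fst zv) + (\<Sum>s<S. lam s * (lin n (A s) (fst zv) - y s)) \<ge> lin n c z + M * v - \<epsilon>"
      using lam(3) zv by auto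
    moreover have "snd zv * (M - (\<Sum>s<S. lam s)) \<ge> 0" using zv lam(2) by auto
    ultimately show "ereal (lin n c z + M * v - \<epsilon>) \<le> ereal (P1_lagr n S c A M y (fst zv) (snd zv) lam)"
      unfolding lagr_eq by simp
  qed
  also have "\<dots> \<le> P1_dual n S c A M X y \<mu>" using pd lam(1) unfolding P1_pd_opt_def by blast
  also have "\<dots> \<le> ereal (P1_lagr n S c A M y x w \<mu>)"
    unfolding P1_dual_def by (rule INF_lower2[of "(x,w)"]) (use x w in auto)
  finally show "lin n c z + M * v \<le> P1_lagr n S c A M y x w \<mu> + \<epsilon>" by simp
qed

lemma P1_mu_sum:
  assumes S: "S > 0" and M: "M \<ge> 0" and pd: "P1_pd_opt n S c A M X y z v \<mu>"
  shows "(\<Sum>s<S. \<mu> s) \<le> M"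
proof (rule ccontr)
  assume H: "\<not> ?thesis"
  define d where "d = (\<Sum>s<S. \<mu> s) - M"
  have d: "d > 0" using H d_def by simp
  define a where "a = lin n c z + (\<Sum>s<S. \<mu> s * (lin n (A s) z - y s)) - (lin n c z + M * v)"
  define W where "W = (\<bar>a\<bar> + 1) / d"
  have W: "W \<ge> 0" using d by (simp add: W_def)
  have z: "z \<in> convh X" using pd unfolding P1_pd_opt_def P1_feas_def by blast
  have "P1_lagr n S c A M y z W \<mu> \<ge> lin n c z + M * v" by (rule P1_lagr_bound[OF S M pd z W])
  then have "a - W * d \<ge> 0" unfolding lagr_eq a_def d_def by (simp add: algebra_simps)
  moreover have "W * d = \<bar>a\<bar> + 1" using d by (simp add: W_def)
  ultimately show False by linarith
qed

lemma P1_subgrad: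
  assumes S: "S > 0" and M: "M \<ge> 0" and pd: "P1_pd_opt n S c A M X y z v \<mu>"
    and f: "P1_feas n S A X y' z' v'"
  shows "lin n c z + M * v \<le> lin n c z' + M * v' + (\<Sum>s<S. \<mu> s * (y' s - y s))"
proof -
  have z': "z' \<in> convh X" "v' \<ge> 0" "\<forall>s<S. lin n (A s) z' \<le> y' s + v'" using f unfolding P1_feas_def by auto
  have mu: "\<forall>s<S. \<mu> s \<ge> 0" using pd unfolding P1_pd_opt_def by blast
  have "P1_lagr n S c A M y z' 0 \<mu> \<ge> lin n c z + M * v" by (rule P1_lagr_bound[OF S M pd z'(1)]) simp
  then have 1: "lin n c z + M * v \<le> lin n c z' + (\<Sum>s<S. \<mu> s * (lin n (A s) z' - y s))"
    unfolding lagr_eq by simp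
  have "(\<Sum>s<S. \<mu> s * (lin n (A s) z' - y s)) = (\<Sum>s<S. \<mu> s * (lin n (A s) z' - y' s)) + (\<Sum>s<S. \<mu> s * (y' s - y s))"
    by (simp add: sum.distrib[symmetric] algebra_simps)
  moreover have "(\<Sum>s<S. \<mu> s * (lin n (A s) z' - y' s)) \<le> (\<Sum>s<S. \<mu> s * v')"
  proof (rule sum_mono)
    fix s assume "s \<in> {..<S}"
    then have "lin n (A s) z' - y' s \<le> v'" "\<mu> s \<ge> 0" using mu z' by auto
    then show "\<mu> s * (lin n (A s) z' - y' s) \<le> \<mu> s * v'" by (rule mult_left_mono)
  qed
  moreover have "(\<Sum>s<S. \<mu> s * v') \<le> M * v'"
    using P1_mu_sum[OF S M pd] z'(2) by (simp add: sum_distrib_right[symmetric] mult_right_mono)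
  ultimately show ?thesis using 1 by linarith
qed



locale sgm =
  fixes N S :: nat and Nb :: "nat \<Rightarrow> nat set" and y \<mu> :: "nat \<Rightarrow> nat \<Rightarrow> nat \<Rightarrow> real"
    and \<alpha> :: "nat \<Rightarrow> real" and F :: "nat \<Rightarrow> real" and K MB :: real and ys :: "nat \<Rightarrow> nat \<Rightarrow> real"
  assumes Npos: "N > 0"
  and graph: "conn_graph N Nb"
  and upd: "\<And>t i s. i < N \<Longrightarrow> y (Suc t) i s = y t i s + \<alpha> t * (\<Sum>j\<in>Nb i. \<mu> t i s - \<mu> t j s)"
  and mu_bd: "\<And>t i s. i < N \<Longrightarrow> s < S \<Longrightarrow> 0 \<le> \<mu> t i s \<and> \<mu> t i s \<le> MB"
  and alpha_nn: "\<And>t. \<alpha> t \<ge> 0"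
  and alpha_div: "filterlim (\<lambda>T. \<Sum>t<T. \<alpha> t) at_top sequentially"
  and alpha_sq: "summable (\<lambda>t. (\<alpha> t)\<^sup>2)"
  and F_lb: "\<And>t. K \<le> F t"
  and sub_iter: "\<And>t t'. F t \<le> F t' + (\<Sum>i<N. \<Sum>s<S. \<mu> t i s * (y t' i s - y t i s))"
  and ys_sum: "\<And>s. s < S \<Longrightarrow> (\<Sum>i<N. ys i s) = (\<Sum>i<N. y 0 i s)"
  and ys_good: "\<And>t. F t \<le> K + (\<Sum>i<N. \<Sum>s<S. \<mu> t i s * (ys i s - y t i s))"
begin

definition Lap :: "(nat \<Rightarrow> nat \<Rightarrow> real) \<Rightarrow> nat \<Rightarrow> nat \<Rightarrow> real" where
  "Lap U i s = (\<Sum>j\<in>Nb i. U i s - U j s)"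
definition E :: "(nat \<Rightarrow> nat \<Rightarrow> real) \<Rightarrow> real" where
  "E U = (\<Sum>s<S. \<Sum>i<N. \<Sum>j\<in>Nb i. (U i s - U j s)\<^sup>2)"
definition Bf :: "(nat \<Rightarrow> nat \<Rightarrow> real) \<Rightarrow> (nat \<Rightarrow> nat \<Rightarrow> real) \<Rightarrow> real" where
  "Bf U V = (\<Sum>s<S. \<Sum>i<N. \<Sum>j\<in>Nb i. (U i s - U j s) * (V i s - V j s))"
definition W :: "nat \<Rightarrow> nat \<Rightarrow> nat \<Rightarrow> real" where
  "W t i s = (\<Sum>\<tau><t. \<alpha> \<tau> * \<mu> \<tau> i s)"

lemma g1: "\<forall>i<N. Nb i \<subseteq> {..<N} \<and> i \<notin> Nb i"
  using graph unfolding conn_graph_def by (elim conjE)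
lemma g2: "\<forall>i<N. \<forall>j<N. j \<in> Nb i \<longleftrightarrow> i \<in> Nb j"
  using graph unfolding conn_graph_def by (elim conjE)
lemma g3: "\<forall>i<N. \<forall>j<N. (i, j) \<in> {(i, j). i < N \<and> j \<in> Nb i}\<^sup>*"
  using graph unfolding conn_graph_def by (elim conjE)
lemma Nb_sub: "i < N \<Longrightarrow> Nb i \<subseteq> {..<N}"
  using g1 by simp
lemma Nb_fin: "i < N \<Longrightarrow> finite (Nb i)"
  by (rule finite_subset[OF Nb_sub]) simp_all
lemma Nb_sym: "i < N \<Longrightarrow> j \<in> Nb i \<Longrightarrow> i \<in> Nb j"
proof -
  assume a: "i < N" "j \<in> Nb i"
  then have "j < N" using Nb_sub by blast
  then show ?thesis using g2 a by simp
qed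
lemma Nb_card: "i < N \<Longrightarrow> card (Nb i) \<le> N"
  using card_mono[OF _ Nb_sub] by fastforce

lemma y_W: "i < N \<Longrightarrow> y t i s = y 0 i s + Lap (W t) i s"
proof (induction t)
  case 0 then show ?case by (simp add: Lap_def W_def)
next
  case (Suc t)
  have "Lap (W (Suc t)) i s = Lap (W t) i s + \<alpha> t * (\<Sum>j\<in>Nb i. \<mu> t i s - \<mu> t j s)"
    unfolding Lap_def W_def by (simp add: sum.distrib[symmetric] sum_distrib_left algebra_simps)
  then show ?case using Suc upd by simp
qed

lemma sym_sum: "(\<Sum>i<N. \<Sum>j\<in>Nb i. g i j) = (\<Sum>i<N. \<Sum>j\<in>Nb i. g j i :: real)"
proof -
  define P where "P = Sigma {..<N} Nb"
  have fin: "\<forall>i\<in>{..<N}. finite (Nb i)" using Nb_fin by auto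
  have "(\<Sum>i<N. \<Sum>j\<in>Nb i. g i j) = (\<Sum>(i,j)\<in>P. g i j)"
    unfolding P_def by (rule sum.Sigma) (use fin in auto)
  also have "\<dots> = (\<Sum>(i,j)\<in>P. g j i)"
    by (rule sum.reindex_bij_witness[of _ "\<lambda>(i,j). (j,i)" "\<lambda>(i,j). (j,i)"])
       (use Nb_sym Nb_sub in \<open>auto simp: P_def\<close>)
  also have "\<dots> = (\<Sum>i<N. \<Sum>j\<in>Nb i. g j i)"
    unfolding P_def by (rule sum.Sigma[symmetric]) (use fin in auto)
  finally show ?thesis .
qed

lemma Bf_Lap: "Bf U V = 2 * (\<Sum>s<S. \<Sum>i<N. Lap U i s * V i s)"
proof -
  have "Bf U V = (\<Sum>s<S. (\<Sum>i<N. \<Sum>j\<in>Nb i. (U i s - U j s) * V i s) - (\<Sum>i<N. \<Sum>j\<in>Nb i. (U i s - U j s) * V j s))"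
    unfolding Bf_def by (simp add: right_diff_distrib sum_subtractf)
  also have "\<dots> = (\<Sum>s<S. 2 * (\<Sum>i<N. \<Sum>j\<in>Nb i. (U i s - U j s) * V i s))"
  proof (rule sum.cong[OF refl])
    fix s
    have "(\<Sum>i<N. \<Sum>j\<in>Nb i. (U i s - U j s) * V j s) = (\<Sum>i<N. \<Sum>j\<in>Nb i. (U j s - U i s) * V i s)"
      by (rule sym_sum)
    also have "\<dots> = - (\<Sum>i<N. \<Sum>j\<in>Nb i. (U i s - U j s) * V i s)"
      by (simp add: sum_negf[symmetric] algebra_simps)
    finally show "(\<Sum>i<N. \<Sum>j\<in>Nb i. (U i s - U j s) * V i s) - (\<Sum>i<N. \<Sum>j\<in>Nb i. (U i s - U j s) * V j s)
       = 2 * (\<Sum>i<N. \<Sum>j\<in>Nb i. (U i s - U j s) * V i s)" by simp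
  qed
  also have "\<dots> = 2 * (\<Sum>s<S. \<Sum>i<N. Lap U i s * V i s)"
    unfolding Lap_def by (simp add: sum_distrib_left sum_distrib_right)
  finally show ?thesis .
qed

lemma E_add: "E (\<lambda>i s. U i s + a * V i s) = E U + 2 * a * Bf U V + a\<^sup>2 * E V"
proof -
  have "E (\<lambda>i s. U i s + a * V i s) = (\<Sum>s<S. \<Sum>i<N. \<Sum>j\<in>Nb i. (U i s - U j s)\<^sup>2
      + 2 * a * ((U i s - U j s) * (V i s - V j s)) + a\<^sup>2 * (V i s - V j s)\<^sup>2)"
    unfolding E_def by (intro sum.cong refl) (simp add: power2_eq_square algebra_simps)
  also have "\<dots> = E U + 2 * a * Bf U V + a\<^sup>2 * E V"
    unfolding E_def Bf_def by (simp add: sum.distrib sum_distrib_left)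
  finally show ?thesis .
qed

lemma E_nn: "E U \<ge> 0"
  unfolding E_def by (intro sum_nonneg) auto

lemma E_term: assumes "i < N" "j \<in> Nb i" "s < S" shows "(U i s - U j s)\<^sup>2 \<le> E U"
proof -
  have "(U i s - U j s)\<^sup>2 \<le> (\<Sum>j\<in>Nb i. (U i s - U j s)\<^sup>2)"
    by (rule member_le_sum) (use assms Nb_fin in auto)
  also have "\<dots> \<le> (\<Sum>i<N. \<Sum>j\<in>Nb i. (U i s - U j s)\<^sup>2)"
    by (rule member_le_sum[of i _ "\<lambda>i. \<Sum>j\<in>Nb i. (U i s - U j s)\<^sup>2"]) (use assms in \<open>auto intro!: sum_nonneg\<close>)
  also have "\<dots> \<le> E U" unfolding E_def
    by (rule member_le_sum[of s _ "\<lambda>s. \<Sum>i<N. \<Sum>j\<in>Nb i. (U i s - U j s)\<^sup>2"])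
       (use assms in \<open>auto intro!: sum_nonneg\<close>)
  finally show ?thesis .
qed

lemma E_term_abs: assumes "i < N" "j \<in> Nb i" "s < S" shows "\<bar>U i s - U j s\<bar> \<le> sqrt (E U)"
  using E_term[OF assms, of U] by (metis real_sqrt_abs real_sqrt_le_mono)

definition Bd :: real where "Bd = real S * real N * real N * MB\<^sup>2"

lemma E_mu: "E (\<mu> t) \<le> Bd"
proof -
  have "E (\<mu> t) \<le> (\<Sum>s<S. \<Sum>i<N. \<Sum>j\<in>Nb i. MB\<^sup>2)"
    unfolding E_def
  proof (intro sum_mono)
    fix s i j assume "s \<in> {..<S}" "i \<in> {..<N}" "j \<in> Nb i"
    then have "j < N" using Nb_sub by auto
    then have "0 \<le> \<mu> t i s \<and> \<mu> t i s \<le> MB" "0 \<le> \<mu> t j s \<and> \<mu> t j s \<le> MB"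
      using mu_bd \<open>i \<in> {..<N}\<close> \<open>s \<in> {..<S}\<close> by auto
    then have "\<bar>\<mu> t i s - \<mu> t j s\<bar> \<le> MB" by (simp add: abs_le_iff)
    then show "(\<mu> t i s - \<mu> t j s)\<^sup>2 \<le> MB\<^sup>2" by (metis abs_ge_zero power2_abs power_mono)
  qed
  also have "\<dots> \<le> (\<Sum>s<S. \<Sum>i<N. real N * MB\<^sup>2)"
    by (intro sum_mono) (use Nb_card in \<open>auto intro!: mult_right_mono\<close>)
  also have "\<dots> = Bd" by (simp add: Bd_def)
  finally show ?thesis .
qed

lemma Bd_nn: "Bd \<ge> 0" unfolding Bd_def by simp

lemma E_step:
  assumes good: "\<And>t. F t \<le> K + (\<Sum>i<N. \<Sum>s<S. \<mu> t i s * (y 0 i s + Lap w i s - y t i s))"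
  shows "E (\<lambda>i s. W (Suc t) i s - w i s) \<le> E (\<lambda>i s. W t i s - w i s) - 4 * \<alpha> t * (F t - K) + (\<alpha> t)\<^sup>2 * Bd"
proof -
  define U where "U = (\<lambda>i s. W t i s - w i s)"
  have eq: "(\<lambda>i s. W (Suc t) i s - w i s) = (\<lambda>i s. U i s + \<alpha> t * \<mu> t i s)"
    unfolding U_def W_def by (simp add: algebra_simps)
  have LU: "\<And>i s. i < N \<Longrightarrow> Lap U i s = y t i s - (y 0 i s + Lap w i s)"
  proof -
    fix i s assume i: "i < N"
    have "Lap U i s = (\<Sum>j\<in>Nb i. (W t i s - W t j s) - (w i s - w j s))"
      unfolding Lap_def U_def by (intro sum.cong) auto
    also have "\<dots> = Lap (W t) i s - Lap w i s" unfolding Lap_def by (simp add: sum_subtractf)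
    finally show "Lap U i s = y t i s - (y 0 i s + Lap w i s)" using y_W[OF i, of t s] by simp
  qed
  have "Bf U (\<mu> t) = 2 * (\<Sum>s<S. \<Sum>i<N. (y t i s - (y 0 i s + Lap w i s)) * \<mu> t i s)"
    unfolding Bf_Lap using LU by simp
  also have "(\<Sum>s<S. \<Sum>i<N. (y t i s - (y 0 i s + Lap w i s)) * \<mu> t i s)
     = - (\<Sum>i<N. \<Sum>s<S. \<mu> t i s * (y 0 i s + Lap w i s - y t i s))"
    by (subst sum.swap) (simp add: sum_negf[symmetric] algebra_simps)
  finally have "Bf U (\<mu> t) = - 2 * (\<Sum>i<N. \<Sum>s<S. \<mu> t i s * (y 0 i s + Lap w i s - y t i s))" by simp
  then have "Bf U (\<mu> t) \<le> - 2 * (F t - K)" using good[of t] by (smt (verit))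
  then have "2 * \<alpha> t * Bf U (\<mu> t) \<le> 2 * \<alpha> t * (- 2 * (F t - K))"
    using alpha_nn by (intro mult_left_mono) auto
  moreover have "(\<alpha> t)\<^sup>2 * E (\<mu> t) \<le> (\<alpha> t)\<^sup>2 * Bd" using E_mu by (intro mult_left_mono) auto
  ultimately show ?thesis unfolding eq E_add U_def by (simp add: algebra_simps)
qed

end


context sgm begin

lemma range_ys: "\<exists>w. \<forall>i<N. \<forall>s<S. ys i s = y 0 i s + Lap w i s"
proof -
  define a where "a i j = (if i < N \<and> j < N \<and> j \<in> Nb i then 1 else 0::real)" for i j
  have sym: "\<forall>i j. a i j = a j i" unfolding a_def using g2 by auto
  have nn: "\<forall>i j. a i j \<ge> 0" unfolding a_def by auto
  have seteq: "{(i,j). i<N \<and> j<N \<and> i\<noteq>j \<and> a i j > 0} = {(i, j). i < N \<and> j \<in> Nb i}"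
    unfolding a_def using g1 by auto
  have conn: "\<forall>i<N. \<forall>j<N. (i,j) \<in> {(i,j). i<N \<and> j<N \<and> i\<noteq>j \<and> a i j > 0}\<^sup>*"
    unfolding seteq using g3 by blast
  have "\<forall>s<S. \<exists>w. \<forall>i<N. (\<Sum>j<N. a i j * (w i - w j)) = ys i s - y 0 i s"
  proof (intro allI impI)
    fix s assume s: "s < S"
    have "(\<Sum>i<N. ys i s - y 0 i s) = 0" using ys_sum[OF s] by (simp add: sum_subtractf)
    then show "\<exists>w. \<forall>i<N. (\<Sum>j<N. a i j * (w i - w j)) = ys i s - y 0 i s"
      using kron[OF sym nn conn] by blast
  qed
  then obtain wf where wf: "\<forall>s<S. \<forall>i<N. (\<Sum>j<N. a i j * (wf s i - wf s j)) = ys i s - y 0 i s"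
    by metis
  define w where "w i s = wf s i" for i s
  have conv: "(\<Sum>j<N. a i j * (v i - v j)) = (\<Sum>j\<in>Nb i. v i - v j)" if i: "i < N" for i v
  proof -
    have "(\<Sum>j<N. a i j * (v i - v j)) = (\<Sum>j<N. if j \<in> Nb i then v i - v j else 0)"
      unfolding a_def using i by (intro sum.cong) auto
    also have "\<dots> = (\<Sum>j\<in>{..<N} \<inter> Nb i. v i - v j)" by (rule sum.inter_restrict[symmetric]) simp
    also have "{..<N} \<inter> Nb i = Nb i" using Nb_sub[OF i] by blast
    finally show ?thesis .
  qed
  show ?thesis
  proof (intro exI[of _ w] allI impI)
    fix i s assume "i < N" "s < S"
    then show "ys i s = y 0 i s + Lap w i s"
      using wf conv[of i "\<lambda>i. wf s i"] unfolding Lap_def w_def by auto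
  qed
qed

lemma path_bound:
  assumes "(a,b) \<in> {(i, j). i < N \<and> j \<in> Nb i}\<^sup>*"
  shows "\<exists>Kp. \<forall>U s. s < S \<longrightarrow> \<bar>U b s - U a s\<bar> \<le> Kp * sqrt (E U)"
  using assms
proof (induction rule: rtrancl_induct)
  case base
  then show ?case by (intro exI[of _ 0]) auto
next
  case (step b c)
  then obtain Kp where Kp: "\<forall>U s. s < S \<longrightarrow> \<bar>U b s - U a s\<bar> \<le> Kp * sqrt (E U)" by blast
  have bc: "b < N" "c \<in> Nb b" using step(2) by auto
  show ?case
  proof (intro exI[of _ "Kp + 1"] allI impI)
    fix U s assume s: "s < S"
    have "\<bar>U b s - U c s\<bar> \<le> sqrt (E U)" by (rule E_term_abs[OF bc s])
    moreover have "\<bar>U b s - U a s\<bar> \<le> Kp * sqrt (E U)" using Kp s by blast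
    ultimately have "\<bar>U c s - U a s\<bar> \<le> Kp * sqrt (E U) + sqrt (E U)" by linarith
    then show "\<bar>U c s - U a s\<bar> \<le> (Kp + 1) * sqrt (E U)" by (simp add: algebra_simps)
  qed
qed

lemma step_sum:
  assumes step: "\<And>t. Phi (Suc t) \<le> Phi t - 4 * \<alpha> t * (F t - K) + (\<alpha> t)\<^sup>2 * Bd"
  shows "Phi t + 4 * (\<Sum>\<tau><t. \<alpha> \<tau> * (F \<tau> - K)) \<le> Phi 0 + Bd * (\<Sum>\<tau><t. (\<alpha> \<tau>)\<^sup>2)"
proof (induction t)
  case 0 then show ?case by simp
next
  case (Suc t)
  then show ?case using step[of t] by (simp add: algebra_simps)
qed

lemma sq_sum_le: "(\<Sum>\<tau><t. (\<alpha> \<tau>)\<^sup>2) \<le> suminf (\<lambda>t. (\<alpha> t)\<^sup>2)"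
  by (rule sum_le_suminf[OF alpha_sq]) auto

lemma often_small:
  assumes step: "\<And>t. Phi (Suc t) \<le> Phi t - 4 * \<alpha> t * (F t - K) + (\<alpha> t)\<^sup>2 * Bd"
    and Phi_nn: "\<And>t. Phi t \<ge> 0"
    and eta: "\<eta> > 0"
  shows "\<exists>t\<ge>T. F t \<le> K + \<eta>"
proof (rule ccontr)
  assume H: "\<not> ?thesis"
  then have big: "\<And>t. t \<ge> T \<Longrightarrow> F t > K + \<eta>" by force
  define C where "C = Phi 0 + Bd * suminf (\<lambda>t. (\<alpha> t)\<^sup>2)"
  have sbd: "(\<Sum>\<tau><t. \<alpha> \<tau> * (F \<tau> - K)) \<le> C / 4" for t
  proof -
    have "Phi t + 4 * (\<Sum>\<tau><t. \<alpha> \<tau> * (F \<tau> - K)) \<le> C"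
      using step_sum[OF step, of t] mult_left_mono[OF sq_sum_le[of t] Bd_nn] unfolding C_def
      by linarith
    then show ?thesis using Phi_nn[of t] by simp
  qed
  have "\<forall>d. (\<Sum>\<tau><T+d. \<alpha> \<tau>) \<le> C / (4*\<eta>) + (\<Sum>\<tau><T. \<alpha> \<tau>)"
  proof
    fix d
    have "\<eta> * (\<Sum>\<tau><d. \<alpha> (T+\<tau>)) = (\<Sum>\<tau><d. \<alpha> (T+\<tau>) * \<eta>)" by (simp add: sum_distrib_left mult.commute)
    also have "\<dots> \<le> (\<Sum>\<tau><d. \<alpha> (T+\<tau>) * (F (T+\<tau>) - K))"
    proof (rule sum_mono)
      fix \<tau> assume "\<tau> \<in> {..<d}"
      have "\<eta> \<le> F (T+\<tau>) - K" using big[of "T+\<tau>"] by simp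
      then show "\<alpha> (T+\<tau>) * \<eta> \<le> \<alpha> (T+\<tau>) * (F (T+\<tau>) - K)" using alpha_nn by (rule mult_left_mono)
    qed
    also have "\<dots> \<le> (\<Sum>\<tau><T. \<alpha> \<tau> * (F \<tau> - K)) + (\<Sum>\<tau><d. \<alpha> (T+\<tau>) * (F (T+\<tau>) - K))"
      using F_lb alpha_nn by (simp add: sum_nonneg)
    also have "\<dots> = (\<Sum>\<tau><T+d. \<alpha> \<tau> * (F \<tau> - K))" by (rule sum_split_add[symmetric])
    also have "\<dots> \<le> C / 4" by (rule sbd)
    finally have "(\<Sum>\<tau><d. \<alpha> (T+\<tau>)) \<le> C / (4*\<eta>)" using eta by (simp add: field_simps)
    then show "(\<Sum>\<tau><T+d. \<alpha> \<tau>) \<le> C / (4*\<eta>) + (\<Sum>\<tau><T. \<alpha> \<tau>)" by (simp add: sum_split_add)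
  qed
  moreover have "eventually (\<lambda>t. C / (4*\<eta>) + (\<Sum>\<tau><T. \<alpha> \<tau>) + 1 \<le> (\<Sum>\<tau><t. \<alpha> \<tau>)) sequentially"
    using alpha_div unfolding filterlim_at_top by blast
  then obtain t0 where t0: "\<And>t. t \<ge> t0 \<Longrightarrow> C / (4*\<eta>) + (\<Sum>\<tau><T. \<alpha> \<tau>) + 1 \<le> (\<Sum>\<tau><t. \<alpha> \<tau>)"
    unfolding eventually_sequentially by blast
  ultimately show False using t0[of "T + t0"] by (smt (verit) le_add2)
qed

end


lemma bw_fin:
  fixes X :: "nat \<Rightarrow> 'a \<Rightarrow> real"
  assumes "finite I" "\<forall>p\<in>I. Bseq (\<lambda>t. X t p)"
  shows "\<exists>r. strict_mono r \<and> (\<forall>p\<in>I. convergent (\<lambda>k. X (r k) p))"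
  using assms
proof (induction I rule: finite_induct)
  case empty
  then show ?case by (intro exI[of _ id]) (auto simp: strict_mono_def)
next
  case (insert p I)
  then obtain r where r: "strict_mono r" "\<forall>q\<in>I. convergent (\<lambda>k. X (r k) q)" by auto
  have B: "Bseq (\<lambda>k. X (r k) p)" using insert(4) Bseq_subseq by auto
  obtain f where f: "strict_mono f" "monoseq (\<lambda>n. X (r (f n)) p)"
    using seq_monosub[of "\<lambda>k. X (r k) p"] by blast
  have "convergent (\<lambda>n. X (r (f n)) p)" using Bseq_monoseq_convergent[OF Bseq_subseq[OF B] f(2)] .
  moreover have "\<forall>q\<in>I. convergent (\<lambda>k. X (r (f k)) q)"
    using convergent_subseq_convergent[OF _ f(1)] r(2) by (auto simp: comp_def)
  ultimately show ?case using strict_mono_o[OF r(1) f(1), unfolded comp_def] by (intro exI[of _ "r \<circ> f"]) auto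
qed

lemma often_subseq:
  fixes G :: "nat \<Rightarrow> real"
  assumes often: "\<And>\<eta> T. \<eta> > 0 \<Longrightarrow> \<exists>t\<ge>T. G t \<le> \<eta>"
  shows "\<exists>r. strict_mono r \<and> (\<forall>k. G (r k) \<le> inverse (real (Suc k)))"
proof -
  define pick where "pick T \<eta> = (SOME t. t \<ge> T \<and> G t \<le> \<eta>)" for T \<eta>
  have pick: "\<eta> > 0 \<Longrightarrow> pick T \<eta> \<ge> T \<and> G (pick T \<eta>) \<le> \<eta>" for T \<eta>
    unfolding pick_def by (rule someI_ex) (use often in auto)
  define r where "r = rec_nat (pick 0 (inverse (real (Suc 0)))) (\<lambda>k r. pick (Suc r) (inverse (real (Suc (Suc k)))))"
  have r0: "r 0 = pick 0 (inverse (real (Suc 0)))" unfolding r_def by simp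
  have rS: "r (Suc k) = pick (Suc (r k)) (inverse (real (Suc (Suc k))))" for k unfolding r_def by simp
  show ?thesis
  proof (intro exI[of _ r] conjI allI)
    show "strict_mono r" unfolding strict_mono_Suc_iff
    proof
      fix k show "r k < r (Suc k)" using pick[of "inverse (real (Suc (Suc k)))" "Suc (r k)"] rS[of k] by simp
    qed
  next
    fix k show "G (r k) \<le> inverse (real (Suc k))"
    proof (cases k)
      case 0 then show ?thesis using pick[of "inverse (real (Suc 0))" 0] r0 by simp
    next
      case (Suc k') then show ?thesis using pick[of "inverse (real (Suc (Suc k')))" "Suc (r k')"] rS[of k'] by simp
    qed
  qed
qed

context sgm begin

lemma Lap_shift: "Lap (\<lambda>i s. U i s - c s) i s = Lap U i s"
  unfolding Lap_def by simp

lemma E_shift: "E (\<lambda>i s. U i s - c s) = E U"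
  unfolding E_def by simp

lemma conv_main:
  "\<exists>yl. (\<forall>t. F t \<le> K + (\<Sum>i<N. \<Sum>s<S. \<mu> t i s * (yl i s - y t i s))) \<and>
        (\<forall>i<N. \<forall>s<S. (\<lambda>t. y t i s) \<longlonglongrightarrow> yl i s)"
proof -
  obtain ws where ws: "\<forall>i<N. \<forall>s<S. ys i s = y 0 i s + Lap ws i s" using range_ys by blast
  have good_ws: "F t \<le> K + (\<Sum>i<N. \<Sum>s<S. \<mu> t i s * (y 0 i s + Lap ws i s - y t i s))" for t
  proof -
    have "(\<Sum>i<N. \<Sum>s<S. \<mu> t i s * (ys i s - y t i s)) = (\<Sum>i<N. \<Sum>s<S. \<mu> t i s * (y 0 i s + Lap ws i s - y t i s))"
      using ws by (intro sum.cong refl) auto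
    then show ?thesis using ys_good[of t] by simp
  qed
  define Phi where "Phi t = E (\<lambda>i s. W t i s - ws i s)" for t
  have stepP: "Phi (Suc t) \<le> Phi t - 4 * \<alpha> t * (F t - K) + (\<alpha> t)\<^sup>2 * Bd" for t
    unfolding Phi_def by (rule E_step[OF good_ws])
  have Phinn: "Phi t \<ge> 0" for t unfolding Phi_def by (rule E_nn)
  define C1 where "C1 = Phi 0 + Bd * suminf (\<lambda>t. (\<alpha> t)\<^sup>2)"
  have Phi_bd: "Phi t \<le> C1" for t
  proof -
    have "(\<Sum>\<tau><t. \<alpha> \<tau> * (F \<tau> - K)) \<ge> 0" using alpha_nn F_lb by (intro sum_nonneg) simp
    then show ?thesis using step_sum[OF stepP, of t] mult_left_mono[OF sq_sum_le[of t] Bd_nn]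
      unfolding C1_def by linarith
  qed
  have often: "\<exists>t\<ge>T. F t - K \<le> \<eta>" if "\<eta> > 0" for \<eta> T
    using often_small[OF stepP Phinn that, of T] by auto
  obtain r1 where r1: "strict_mono r1" "\<And>k. F (r1 k) - K \<le> inverse (real (Suc k))"
    using often_subseq[of "\<lambda>t. F t - K"] often by blast
  have Fr1: "(\<lambda>k. F (r1 k)) \<longlonglongrightarrow> K"
  proof (rule tendsto_sandwich[of "\<lambda>_. K" _ _ "\<lambda>k. K + inverse (real (Suc k))"])
    show "\<forall>\<^sub>F n in sequentially. K \<le> F (r1 n)" using F_lb by simp
    show "\<forall>\<^sub>F n in sequentially. F (r1 n) \<le> K + inverse (real (Suc n))" using r1(2) by (simp add: algebra_simps)
    show "(\<lambda>_. K) \<longlonglongrightarrow> K" by simp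
    show "(\<lambda>k. K + inverse (real (Suc k))) \<longlonglongrightarrow> K"
      using tendsto_add[OF tendsto_const LIMSEQ_inverse_real_of_nat, of K] by simp
  qed
  define Wn where "Wn t i s = W t i s - W t 0 s" for t i s
  have "\<forall>i<N. \<exists>Kp. \<forall>U s. s < S \<longrightarrow> \<bar>U i s - U 0 s\<bar> \<le> Kp * sqrt (E U)"
    using path_bound g3 Npos by blast
  then obtain KP where KP: "\<And>i U s. i < N \<Longrightarrow> s < S \<Longrightarrow> \<bar>U i s - U 0 s\<bar> \<le> KP i * sqrt (E U)"
    by metis
  have Wn_bd: "\<bar>Wn t i s\<bar> \<le> \<bar>KP i\<bar> * sqrt C1 + \<bar>ws i s - ws 0 s\<bar>" if i: "i < N" and s: "s < S" for t i s
  proof -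
    define U where "U = (\<lambda>i s. W t i s - ws i s)"
    have "\<bar>U i s - U 0 s\<bar> \<le> KP i * sqrt (Phi t)" using KP[OF i s, of U] unfolding Phi_def U_def .
    also have "\<dots> \<le> \<bar>KP i\<bar> * sqrt (Phi t)" by (rule mult_right_mono) (auto simp: Phinn)
    also have "\<dots> \<le> \<bar>KP i\<bar> * sqrt C1" using Phi_bd by (simp add: mult_left_mono)
    finally have "\<bar>U i s - U 0 s\<bar> \<le> \<bar>KP i\<bar> * sqrt C1" .
    moreover have "Wn t i s = (U i s - U 0 s) + (ws i s - ws 0 s)" unfolding Wn_def U_def by simp
    ultimately show ?thesis by linarith
  qed
  have "\<exists>r. strict_mono r \<and> (\<forall>p\<in>{..<N} \<times> {..<S}. convergent (\<lambda>k. (\<lambda>k (i,s). Wn (r1 k) i s) (r k) p))"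
  proof (rule bw_fin)
    show "\<forall>p\<in>{..<N} \<times> {..<S}. Bseq (\<lambda>t. (\<lambda>k (i,s). Wn (r1 k) i s) t p)"
    proof
      fix p assume "p \<in> {..<N} \<times> {..<S}"
      then obtain i s where p: "p = (i,s)" "i < N" "s < S" by auto
      show "Bseq (\<lambda>t. (\<lambda>k (i,s). Wn (r1 k) i s) t p)"
        unfolding p(1) by (rule BseqI'[of _ "\<bar>KP i\<bar> * sqrt C1 + \<bar>ws i s - ws 0 s\<bar>"]) (use Wn_bd p in auto)
    qed
  qed simp
  then obtain r2 where r2: "strict_mono r2" "\<And>i s. i < N \<Longrightarrow> s < S \<Longrightarrow> convergent (\<lambda>k. Wn (r1 (r2 k)) i s)"
    by fastforce
  define r where "r = r1 \<circ> r2"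
  have r: "strict_mono r" unfolding r_def by (rule strict_mono_o[OF r1(1) r2(1)])
  define wl where "wl i s = lim (\<lambda>k. Wn (r k) i s)" for i s
  have Wn_conv: "(\<lambda>k. Wn (r k) i s) \<longlonglongrightarrow> wl i s" if "i < N" "s < S" for i s
    unfolding wl_def using r2(2)[OF that] unfolding r_def comp_def by (simp add: convergent_LIMSEQ_iff)
  define yl where "yl i s = y 0 i s + Lap wl i s" for i s
  have y_r: "(\<lambda>k. y (r k) i s) \<longlonglongrightarrow> yl i s" if i: "i < N" and s: "s < S" for i s
  proof -
    have eq: "y (r k) i s = y 0 i s + (\<Sum>j\<in>Nb i. Wn (r k) i s - Wn (r k) j s)" for k
      using y_W[OF i, of "r k" s] unfolding Lap_def Wn_def by simp
    have "(\<lambda>k. y 0 i s + (\<Sum>j\<in>Nb i. Wn (r k) i s - Wn (r k) j s)) \<longlonglongrightarrow> y 0 i s + (\<Sum>j\<in>Nb i. wl i s - wl j s)"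
    proof (intro tendsto_add tendsto_const tendsto_sum tendsto_diff)
      fix j assume "j \<in> Nb i"
      then have "j < N" using Nb_sub[OF i] by auto
      then show "(\<lambda>k. Wn (r k) j s) \<longlonglongrightarrow> wl j s" using Wn_conv s by blast
    qed (use Wn_conv i s in blast)
    then show ?thesis unfolding eq yl_def Lap_def .
  qed
  have F_r: "(\<lambda>k. F (r k)) \<longlonglongrightarrow> K"
    using LIMSEQ_subseq_LIMSEQ[OF Fr1 r2(1)] unfolding r_def comp_def .
  have good_yl: "F t \<le> K + (\<Sum>i<N. \<Sum>s<S. \<mu> t i s * (yl i s - y t i s))" for t
  proof (rule tendsto_le[OF trivial_limit_sequentially])
    show "(\<lambda>k. F (r k) + (\<Sum>i<N. \<Sum>s<S. \<mu> t i s * (y (r k) i s - y t i s))) \<longlonglongrightarrow>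
          K + (\<Sum>i<N. \<Sum>s<S. \<mu> t i s * (yl i s - y t i s))"
      by (intro tendsto_add F_r tendsto_sum tendsto_mult tendsto_const tendsto_diff y_r) auto
    show "(\<lambda>k. F t) \<longlonglongrightarrow> F t" by simp
    show "\<forall>\<^sub>F k in sequentially. F t \<le> F (r k) + (\<Sum>i<N. \<Sum>s<S. \<mu> t i s * (y (r k) i s - y t i s))"
      using sub_iter by simp
  qed
  define Psi where "Psi t = E (\<lambda>i s. W t i s - wl i s)" for t
  have stepQ: "Psi (Suc t) \<le> Psi t + (\<alpha> t)\<^sup>2 * Bd" for t
  proof -
    have "Psi (Suc t) \<le> Psi t - 4 * \<alpha> t * (F t - K) + (\<alpha> t)\<^sup>2 * Bd"
      unfolding Psi_def by (rule E_step) (use good_yl in \<open>simp add: yl_def\<close>)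
    moreover have "4 * \<alpha> t * (F t - K) \<ge> 0" using alpha_nn F_lb by simp
    ultimately show ?thesis by linarith
  qed
  have Psinn: "Psi t \<ge> 0" for t unfolding Psi_def by (rule E_nn)
  have Psi_tail: "Psi t \<le> Psi t0 + Bd * (\<Sum>\<tau>\<in>{t0..<t}. (\<alpha> \<tau>)\<^sup>2)" if "t0 \<le> t" for t0 t
    using that
  proof (induction t rule: dec_induct)
    case base then show ?case by simp
  next
    case (step t)
    then show ?case using stepQ[of t] by (simp add: algebra_simps)
  qed
  have Psi_r: "(\<lambda>k. Psi (r k)) \<longlonglongrightarrow> 0"
  proof -
    have eq: "Psi (r k) = E (\<lambda>i s. Wn (r k) i s - wl i s)" for k
    proof -
      have "E (\<lambda>i s. Wn (r k) i s - wl i s) = E (\<lambda>i s. (W (r k) i s - wl i s) - W (r k) 0 s)"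
        unfolding Wn_def by (simp add: algebra_simps)
      also have "\<dots> = Psi (r k)" unfolding Psi_def by (rule E_shift)
      finally show ?thesis by simp
    qed
    have "(\<lambda>k. E (\<lambda>i s. Wn (r k) i s - wl i s)) \<longlonglongrightarrow> (\<Sum>s<S. \<Sum>i<N. \<Sum>j\<in>Nb i. (0::real))"
      unfolding E_def
    proof (intro tendsto_sum)
      fix s i j assume s: "s \<in> {..<S}" and i: "i \<in> {..<N}" and j: "j \<in> Nb i"
      have jN: "j < N" using Nb_sub i j by auto
      have "(\<lambda>k. (Wn (r k) i s - wl i s - (Wn (r k) j s - wl j s))\<^sup>2) \<longlonglongrightarrow> (wl i s - wl i s - (wl j s - wl j s))\<^sup>2"
        by (intro tendsto_power tendsto_diff tendsto_const) (use Wn_conv s i jN in auto)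
      then show "(\<lambda>k. (Wn (r k) i s - wl i s - (Wn (r k) j s - wl j s))\<^sup>2) \<longlonglongrightarrow> 0" by simp
    qed
    then show ?thesis unfolding eq by simp
  qed
  have Psi_lim: "Psi \<longlonglongrightarrow> 0"
  proof (rule LIMSEQ_I)
    fix \<eta> :: real assume eta: "\<eta> > 0"
    define e2 where "e2 = \<eta> / (2 * (Bd + 1))"
    have e2: "e2 > 0" using eta Bd_nn by (simp add: e2_def)
    obtain T1 where T1: "\<And>m n. m \<ge> T1 \<Longrightarrow> norm (\<Sum>\<tau>\<in>{m..<n}. (\<alpha> \<tau>)\<^sup>2) < e2"
      using alpha_sq e2 unfolding summable_Cauchy by blast
    obtain k0 where k0: "\<And>k. k \<ge> k0 \<Longrightarrow> norm (Psi (r k) - 0) < \<eta>/2"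
      using LIMSEQ_D[OF Psi_r, of "\<eta>/2"] eta by auto
    define k where "k = max k0 T1"
    have rk: "r k \<ge> T1" using seq_suble[OF r, of k] unfolding k_def by simp
    have Pk: "Psi (r k) < \<eta>/2" using k0[of k] unfolding k_def by simp
    show "\<exists>no. \<forall>t\<ge>no. norm (Psi t - 0) < \<eta>"
    proof (intro exI allI impI)
      fix t assume t: "t \<ge> r k"
      have s: "(\<Sum>\<tau>\<in>{r k..<t}. (\<alpha> \<tau>)\<^sup>2) < e2" using T1[OF rk, of t] by (simp add: sum_nonneg)
      have "Bd * (\<Sum>\<tau>\<in>{r k..<t}. (\<alpha> \<tau>)\<^sup>2) \<le> Bd * e2" using s Bd_nn by (simp add: mult_left_mono)
      also have "Bd * e2 < \<eta>/2" using eta Bd_nn by (simp add: e2_def field_simps)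
      finally have "Psi t < \<eta>" using Psi_tail[OF t] Pk by linarith
      then show "norm (Psi t - 0) < \<eta>" using Psinn[of t] by simp
    qed
  qed
  have y_conv: "(\<lambda>t. y t i s) \<longlonglongrightarrow> yl i s" if i: "i < N" and s: "s < S" for i s
  proof -
    have bnd: "norm (y t i s - yl i s) \<le> real N * sqrt (Psi t)" for t
    proof -
      have "(\<Sum>j\<in>Nb i. (W t i s - wl i s) - (W t j s - wl j s)) = (\<Sum>j\<in>Nb i. (W t i s - W t j s) - (wl i s - wl j s))"
        by (intro sum.cong) auto
      also have "\<dots> = Lap (W t) i s - Lap wl i s" unfolding Lap_def by (simp add: sum_subtractf)
      finally have "y t i s - yl i s = (\<Sum>j\<in>Nb i. (W t i s - wl i s) - (W t j s - wl j s))"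
        using y_W[OF i, of t s] unfolding yl_def by simp
      then have "\<bar>y t i s - yl i s\<bar> \<le> (\<Sum>j\<in>Nb i. \<bar>(W t i s - wl i s) - (W t j s - wl j s)\<bar>)"
        by (simp add: sum_abs)
      also have "\<dots> \<le> (\<Sum>j\<in>Nb i. sqrt (Psi t))"
        unfolding Psi_def by (intro sum_mono E_term_abs[OF i _ s]) auto
      also have "\<dots> = real (card (Nb i)) * sqrt (Psi t)" by simp
      also have "\<dots> \<le> real N * sqrt (Psi t)" using Nb_card[OF i] by (intro mult_right_mono) (auto simp: Psinn)
      finally show ?thesis by simp
    qed
    have "(\<lambda>t. real N * sqrt (Psi t)) \<longlonglongrightarrow> real N * sqrt 0"
      by (intro tendsto_mult tendsto_const tendsto_real_sqrt Psi_lim)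
    then have lim0: "(\<lambda>t. real N * sqrt (Psi t)) \<longlonglongrightarrow> 0" by simp
    have "(\<lambda>t. y t i s - yl i s) \<longlonglongrightarrow> 0"
      by (rule Lim_null_comparison[OF _ lim0]) (rule always_eventually, rule allI, rule bnd)
    then show ?thesis by (rule LIM_zero_cancel)
  qed
  show ?thesis using good_yl y_conv by blast
qed

end


lemma lin_bdd:
  assumes "\<forall>x\<in>P. \<forall>k<n. \<bar>x k\<bar> \<le> B"
  shows "bdd_above ((\<lambda>x. lin n a x) ` P)" "bdd_below ((\<lambda>x. lin n a x) ` P)"
proof -
  have b: "\<bar>lin n a x\<bar> \<le> (\<Sum>k<n. \<bar>a k\<bar> * B)" if x: "x \<in> P" for x
  proof -
    have "\<bar>lin n a x\<bar> \<le> (\<Sum>k<n. \<bar>a k * x k\<bar>)" unfolding lin_def by (rule sum_abs)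
    also have "\<dots> \<le> (\<Sum>k<n. \<bar>a k\<bar> * B)"
      by (intro sum_mono) (use assms x in \<open>auto simp: abs_mult intro: mult_left_mono\<close>)
    finally show ?thesis .
  qed
  show "bdd_above ((\<lambda>x. lin n a x) ` P)"
    by (rule bdd_aboveI[of _ "\<Sum>k<n. \<bar>a k\<bar> * B"]) (use b in \<open>force simp: abs_le_iff\<close>)
  show "bdd_below ((\<lambda>x. lin n a x) ` P)"
    by (rule bdd_belowI[of _ "- (\<Sum>k<n. \<bar>a k\<bar> * B)"]) (use b in \<open>force simp: abs_le_iff\<close>)
qed

lemma convh_bounds:
  assumes "z \<in> convh P" "\<And>p. p \<in> P \<Longrightarrow> lo \<le> lin n a p \<and> lin n a p \<le> hi"
  shows "lo \<le> lin n a z \<and> lin n a z \<le> hi"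
proof -
  obtain K :: nat and p w where pw: "\<forall>j<K. p j \<in> P \<and> w j \<ge> 0" "(\<Sum>j<K. w j) = 1" "z = (\<lambda>k. \<Sum>j<K. w j * p j k)"
    using assms(1) unfolding convh_def mem_Collect_eq by blast
  have eq: "lin n a z = (\<Sum>j<K. w j * lin n a (p j))" unfolding pw(3) by (rule lin_comb)
  have "(\<Sum>j<K. w j * lin n a (p j)) \<le> (\<Sum>j<K. w j * hi)"
    by (intro sum_mono mult_left_mono) (use pw assms(2) in auto)
  moreover have "(\<Sum>j<K. w j * lo) \<le> (\<Sum>j<K. w j * lin n a (p j))"
    by (intro sum_mono mult_left_mono) (use pw assms(2) in auto)
  ultimately show ?thesis using pw(2) eq by (simp add: sum_distrib_right[symmetric])
qed

lemma sym_sum_g: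
  assumes graph: "conn_graph N Nb"
  shows "(\<Sum>i<N. \<Sum>j\<in>Nb i. g i j) = (\<Sum>i<N. \<Sum>j\<in>Nb i. g j i :: real)"
proof -
  have g1: "\<forall>i<N. Nb i \<subseteq> {..<N} \<and> i \<notin> Nb i" using graph unfolding conn_graph_def by (elim conjE)
  have g2: "\<forall>i<N. \<forall>j<N. j \<in> Nb i \<longleftrightarrow> i \<in> Nb j" using graph unfolding conn_graph_def by (elim conjE)
  define P where "P = Sigma {..<N} Nb"
  have fin: "\<forall>i\<in>{..<N}. finite (Nb i)" using g1 finite_subset by (metis finite_lessThan lessThan_iff)
  have "(\<Sum>i<N. \<Sum>j\<in>Nb i. g i j) = (\<Sum>(i,j)\<in>P. g i j)"
    unfolding P_def by (rule sum.Sigma) (use fin in auto)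
  also have "\<dots> = (\<Sum>(i,j)\<in>P. g j i)"
  proof (rule sum.reindex_bij_witness[of _ "\<lambda>(i,j). (j,i)" "\<lambda>(i,j). (j,i)"])
    fix a assume "a \<in> P"
    then obtain i j where a: "a = (i,j)" "i < N" "j \<in> Nb i" unfolding P_def by auto
    then have "j < N" using g1 by auto
    then show "(case a of (i, j) \<Rightarrow> (j, i)) \<in> P" using a g2 unfolding P_def by auto
  next
    fix a assume "a \<in> P"
    then obtain i j where a: "a = (i,j)" "i < N" "j \<in> Nb i" unfolding P_def by auto
    then have "j < N" using g1 by auto
    then show "(case a of (i, j) \<Rightarrow> (j, i)) \<in> P" using a g2 unfolding P_def by auto
  qed auto
  also have "\<dots> = (\<Sum>i<N. \<Sum>j\<in>Nb i. g j i)"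
    unfolding P_def by (rule sum.Sigma[symmetric]) (use fin in auto)
  finally show ?thesis .
qed

lemma lap_sum_zero:
  assumes "conn_graph N Nb"
  shows "(\<Sum>i<N. \<Sum>j\<in>Nb i. f i - f j) = (0::real)"
proof -
  have "(\<Sum>i<N. \<Sum>j\<in>Nb i. f i - f j) = (\<Sum>i<N. \<Sum>j\<in>Nb i. f j - f i)" by (rule sym_sum_g[OF assms])
  also have "\<dots> = - (\<Sum>i<N. \<Sum>j\<in>Nb i. f i - f j)" by (simp add: sum_negf[symmetric])
  finally show ?thesis by simp
qed



locale mt =
  fixes N S :: nat and n :: "nat \<Rightarrow> nat"
    and c :: "nat \<Rightarrow> nat \<Rightarrow> real" and A :: "nat \<Rightarrow> nat \<Rightarrow> nat \<Rightarrow> real" and b :: "nat \<Rightarrow> real"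
    and X :: "nat \<Rightarrow> (nat \<Rightarrow> real) set" and r :: real and zh :: "nat \<Rightarrow> nat \<Rightarrow> real"
    and zs :: "nat \<Rightarrow> nat \<Rightarrow> real"
  assumes N_pos: "N > 0" and S_pos: "S > 0"
    and X_bounded: "\<And>i. i < N \<Longrightarrow> \<exists>B. \<forall>x\<in>X i. \<forall>k<n i. \<bar>x k\<bar> \<le> B"
    and MILP_feasible: "\<exists>xs. (\<forall>i<N. xs i \<in> X i) \<and> (\<forall>s<S. (\<Sum>i<N. lin (n i) (A i s) (xs i)) \<le> b s)"
    and r_nn: "r \<ge> 0"
    and zs: "LPr_opt N S n c A b X r zs"
    and zh: "\<And>i. i < N \<Longrightarrow> zh i \<in> convh (X i)"
    and zeta_pos: "zeta N S n A b r zh > 0"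
begin

definition lo where "lo i = Inf ((\<lambda>x. lin (n i) (c i) x) ` X i)"
definition hi where "hi i = Sup ((\<lambda>x. lin (n i) (c i) x) ` X i)"
definition Dsum where "Dsum = (\<Sum>i<N. hi i - lo i)"
definition Ks where "Ks = (\<Sum>i<N. lin (n i) (c i) (zs i))"
abbreviation "\<zeta> \<equiv> zeta N S n A b r zh"

lemma zs_feas: "\<forall>i<N. zs i \<in> convh (X i)" "\<forall>s<S. (\<Sum>i<N. lin (n i) (A i s) (zs i)) \<le> b s - r"
  using zs unfolding LPr_opt_def Let_def by auto

lemma zs_opt: "(\<forall>i<N. zz i \<in> convh (X i)) \<Longrightarrow> (\<forall>s<S. (\<Sum>i<N. lin (n i) (A i s) (zz i)) \<le> b s - r)
   \<Longrightarrow> Ks \<le> (\<Sum>i<N. lin (n i) (c i) (zz i))"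
  using zs unfolding LPr_opt_def Let_def Ks_def by blast

lemma bnds_X: "i < N \<Longrightarrow> p \<in> X i \<Longrightarrow> lo i \<le> lin (n i) (c i) p \<and> lin (n i) (c i) p \<le> hi i"
proof -
  assume i: "i < N" and p: "p \<in> X i"
  obtain B where "\<forall>x\<in>X i. \<forall>k<n i. \<bar>x k\<bar> \<le> B" using X_bounded[OF i] by blast
  from lin_bdd[OF this] show ?thesis unfolding lo_def hi_def
    using p by (auto intro: cInf_lower cSup_upper)
qed

lemma bnds: "i < N \<Longrightarrow> z \<in> convh (X i) \<Longrightarrow> lo i \<le> lin (n i) (c i) z \<and> lin (n i) (c i) z \<le> hi i"
  by (rule convh_bounds) (use bnds_X in blast)+

lemma Dsum_nn: "Dsum \<ge> 0"
proof -
  have "hi i - lo i \<ge> 0" if "i < N" for i using bnds[OF that zh[OF that]] by simp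
  then show ?thesis unfolding Dsum_def by (intro sum_nonneg) auto
qed

lemma zh_slack: "s < S \<Longrightarrow> (\<Sum>i<N. lin (n i) (A i s) (zh i)) \<le> b s - r - \<zeta>"
proof -
  assume s: "s < S"
  have "\<zeta> \<le> b s - r - (\<Sum>i<N. lin (n i) (A i s) (zh i))"
    unfolding zeta_def by (rule Min_le) (use s in auto)
  then show ?thesis by simp
qed

lemma mix:
  assumes zz: "\<forall>i<N. zz i \<in> convh (X i)" and V: "V \<ge> 0"
    and cons: "\<forall>s<S. (\<Sum>i<N. lin (n i) (A i s) (zz i)) \<le> b s - r + V"
  shows "Ks \<le> (\<Sum>i<N. lin (n i) (c i) (zz i)) + V / \<zeta> * Dsum"
proof -
  define u where "u = V / (V + \<zeta>)"
  have u: "0 \<le> u" "u \<le> 1" "u \<le> V / \<zeta>" using V zeta_pos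
    by (auto simp: u_def field_simps)
  have ueq: "(1-u) * V - u * \<zeta> = 0" using V zeta_pos by (simp add: u_def field_simps)
  define w where "w i = (\<lambda>k. (1-u) * zz i k + u * zh i k)" for i
  have wX: "\<forall>i<N. w i \<in> convh (X i)"
    using convh_cvx zz zh u unfolding cvx_def w_def by blast
  have wA: "\<forall>s<S. (\<Sum>i<N. lin (n i) (A i s) (w i)) \<le> b s - r"
  proof (intro allI impI)
    fix s assume s: "s < S"
    have "(\<Sum>i<N. lin (n i) (A i s) (w i)) = (1-u) * (\<Sum>i<N. lin (n i) (A i s) (zz i)) + u * (\<Sum>i<N. lin (n i) (A i s) (zh i))"
      unfolding w_def lin_aff by (simp add: sum.distrib sum_distrib_left)
    also have "\<dots> \<le> (1-u) * (b s - r + V) + u * (b s - r - \<zeta>)"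
      using cons s zh_slack[OF s] u by (intro add_mono mult_left_mono) auto
    also have "\<dots> = b s - r + ((1-u) * V - u * \<zeta>)" by (simp add: algebra_simps)
    finally show "(\<Sum>i<N. lin (n i) (A i s) (w i)) \<le> b s - r" using ueq by simp
  qed
  have "Ks \<le> (\<Sum>i<N. lin (n i) (c i) (w i))" by (rule zs_opt[OF wX wA])
  also have "\<dots> = (\<Sum>i<N. lin (n i) (c i) (zz i)) + u * ((\<Sum>i<N. lin (n i) (c i) (zh i)) - (\<Sum>i<N. lin (n i) (c i) (zz i)))"
  proof -
    have "(\<Sum>i<N. lin (n i) (c i) (w i)) = (\<Sum>i<N. lin (n i) (c i) (zz i) + u * (lin (n i) (c i) (zh i) - lin (n i) (c i) (zz i)))"
      unfolding w_def lin_aff by (intro sum.cong) (simp_all add: algebra_simps)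
    also have "\<dots> = (\<Sum>i<N. lin (n i) (c i) (zz i)) + u * ((\<Sum>i<N. lin (n i) (c i) (zh i)) - (\<Sum>i<N. lin (n i) (c i) (zz i)))"
      by (simp add: sum.distrib sum_distrib_left[symmetric] sum_subtractf)
    finally show ?thesis .
  qed
  also have "(\<Sum>i<N. lin (n i) (c i) (zh i)) - (\<Sum>i<N. lin (n i) (c i) (zz i)) \<le> Dsum"
  proof -
    have "(\<Sum>i<N. lin (n i) (c i) (zh i)) - (\<Sum>i<N. lin (n i) (c i) (zz i)) = (\<Sum>i<N. lin (n i) (c i) (zh i) - lin (n i) (c i) (zz i))"
      by (simp add: sum_subtractf)
    also have "\<dots> \<le> Dsum" unfolding Dsum_def
    proof (intro sum_mono)
      fix i assume "i \<in> {..<N}"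
      then have i: "i < N" by simp
      show "lin (n i) (c i) (zh i) - lin (n i) (c i) (zz i) \<le> hi i - lo i"
        using bnds[OF i zh[OF i]] bnds[OF i] zz i by fastforce
    qed
    finally show ?thesis .
  qed
  then have "u * ((\<Sum>i<N. lin (n i) (c i) (zh i)) - (\<Sum>i<N. lin (n i) (c i) (zz i))) \<le> u * Dsum"
    using u by (simp add: mult_left_mono)
  also have "u * Dsum \<le> V / \<zeta> * Dsum" using mult_right_mono[OF u(3) Dsum_nn] by simp
  finally show ?thesis by simp
qed

lemma Ks_le_MILP: "Ks \<le> J_MILP N S n c A b X + r / \<zeta> * Dsum"
proof -
  have "Ks - r / \<zeta> * Dsum \<le> J_MILP N S n c A b X"
    unfolding J_MILP_def
  proof (rule cInf_greatest)
    show "{\<Sum>i<N. lin (n i) (c i) (xs i) |xs. (\<forall>i<N. xs i \<in> X i) \<and> (\<forall>s<S. (\<Sum>i<N. lin (n i) (A i s) (xs i)) \<le> b s)} \<noteq> {}"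
      using MILP_feasible by blast
  next
    fix q assume "q \<in> {\<Sum>i<N. lin (n i) (c i) (xs i) |xs. (\<forall>i<N. xs i \<in> X i) \<and> (\<forall>s<S. (\<Sum>i<N. lin (n i) (A i s) (xs i)) \<le> b s)}"
    then obtain xs where xs: "q = (\<Sum>i<N. lin (n i) (c i) (xs i))" "\<forall>i<N. xs i \<in> X i"
      "\<forall>s<S. (\<Sum>i<N. lin (n i) (A i s) (xs i)) \<le> b s" by blast
    have "Ks \<le> q + r / \<zeta> * Dsum" unfolding xs(1)
      by (rule mix) (use xs mem_convh r_nn in auto)
    then show "Ks - r / \<zeta> * Dsum \<le> q" by simp
  qed
  then show ?thesis by simp
qed

lemma exact_penalty:
  assumes M: "M \<ge> Dsum / \<zeta>"
    and ysum: "\<forall>s<S. (\<Sum>i<N. y' i s) = b s - r"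
    and f: "\<forall>i<N. P1_feas (n i) S (A i) (X i) (y' i) (z' i) (v' i)"
  shows "Ks \<le> (\<Sum>i<N. lin (n i) (c i) (z' i) + M * v' i)"
proof -
  define V where "V = (\<Sum>i<N. v' i)"
  have V: "V \<ge> 0" unfolding V_def using f unfolding P1_feas_def by (intro sum_nonneg) auto
  have cons: "\<forall>s<S. (\<Sum>i<N. lin (n i) (A i s) (z' i)) \<le> b s - r + V"
  proof (intro allI impI)
    fix s assume s: "s < S"
    have "(\<Sum>i<N. lin (n i) (A i s) (z' i)) \<le> (\<Sum>i<N. y' i s + v' i)"
      by (intro sum_mono) (use f s in \<open>auto simp: P1_feas_def\<close>)
    then show "(\<Sum>i<N. lin (n i) (A i s) (z' i)) \<le> b s - r + V"
      using ysum s unfolding V_def by (simp add: sum.distrib)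
  qed
  have "Ks \<le> (\<Sum>i<N. lin (n i) (c i) (z' i)) + V / \<zeta> * Dsum"
    by (rule mix) (use f V cons in \<open>auto simp: P1_feas_def\<close>)
  also have "V / \<zeta> * Dsum \<le> M * V"
  proof -
    have "V / \<zeta> * Dsum = Dsum / \<zeta> * V" by simp
    also have "\<dots> \<le> M * V" using M V by (rule mult_right_mono)
    finally show ?thesis .
  qed
  finally show ?thesis unfolding V_def by (simp add: sum.distrib sum_distrib_left)
qed

end


theorem theorem4:
  fixes N S :: nat and n Zc m :: "nat \<Rightarrow> nat"
    and D :: "nat \<Rightarrow> nat \<Rightarrow> nat \<Rightarrow> real" and d :: "nat \<Rightarrow> nat \<Rightarrow> real"
    and c :: "nat \<Rightarrow> nat \<Rightarrow> real" and A :: "nat \<Rightarrow> nat \<Rightarrow> nat \<Rightarrow> real" and b :: "nat \<Rightarrow> real"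
    and X :: "nat \<Rightarrow> (nat \<Rightarrow> real) set"
    and Nb :: "nat \<Rightarrow> nat set" and \<delta> :: real and \<alpha> :: "nat \<Rightarrow> real"
    and xL :: "nat \<Rightarrow> nat \<Rightarrow> real" and lt :: "nat \<Rightarrow> real" and zh :: "nat \<Rightarrow> nat \<Rightarrow> real"
  assumes N_pos: "N > 0" and S_pos: "S > 0"
    and X_def: "\<And>i. X i = Xset (n i) (Zc i) (D i) (d i) (m i)"
    and Zc_le: "\<And>i. i < N \<Longrightarrow> Zc i \<le> n i"
    and X_nonempty: "\<And>i. i < N \<Longrightarrow> X i \<noteq> {}"
    and X_bounded: "\<And>i. i < N \<Longrightarrow> \<exists>B. \<forall>x\<in>X i. \<forall>k<n i. \<bar>x k\<bar> \<le> B"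
    and MILP_feasible: "\<exists>xs. (\<forall>i<N. xs i \<in> X i) \<and>
                          (\<forall>s<S. (\<Sum>i<N. lin (n i) (A i s) (xs i)) \<le> b s)"
    and graph: "conn_graph N Nb"
    and xL: "\<And>i. i < N \<Longrightarrow> xL_opt (n i) S (A i) (X i) (xL i) (lt i)"
    and delta_pos: "\<delta> > 0"
    and assmA: "\<exists>zs. LPr_opt N S n c A b X (sigma_ASY N S n A X xL + \<delta>) zs \<and>
                 (\<forall>zs'. LPr_opt N S n c A b X (sigma_ASY N S n A X xL + \<delta>) zs'
                        \<longrightarrow> (\<forall>i<N. zs' i = zs i))"
    and assmB: "\<And>t. \<alpha> t \<ge> 0" "filterlim (\<lambda>T. \<Sum>t<T. \<alpha> t) at_top sequentially"
               "summable (\<lambda>t. (\<alpha> t)\<^sup>2)"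
    and assmC: "\<And>i. i < N \<Longrightarrow> zh i \<in> convh (X i)"
               "zeta N S n A b (sigma_ASY N S n A X xL + \<delta>) zh > 0"
  shows "\<exists>M0. \<forall>M>M0. \<forall>\<epsilon> :: nat \<Rightarrow> real. (\<forall>i<N. \<epsilon> i > 0) \<longrightarrow>
     (\<forall>y z v \<mu> x. alg_run N S n c A b X Nb (sigma_ASY N S n A X xL + \<delta>) \<alpha> M y z v \<mu> x \<longrightarrow>
        (\<exists>T>0. \<forall>t\<ge>T.
          (\<Sum>i<N. lin (n i) (c i) (x t i)) - J_MILP N S n c A b X
            \<le> (\<Sum>i<N. lin (n i) (c i) (x t i) - (lin (n i) (c i) (z t i) + M * v t i))
              + (\<Sum>i<N. (\<Sum>s<S. \<bar>\<mu> t i s\<bar>) * \<epsilon> i)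
              + Gamma_bound N n c X (zeta N S n A b (sigma_ASY N S n A X xL + \<delta>) zh)
                  * (sigma_ASY N S n A X xL + \<delta>)))"
proof -
  define r where "r = sigma_ASY N S n A X xL + \<delta>"
  have sig_nn: "sigma_ASY N S n A X xL \<ge> 0"
  proof -
    define g where "g i s = lin (n i) (A i s) (xL i) - Lmin (n i) (A i s) (X i)" for i s
    have setq: "{lin (n i) (A i s) (xL i) - Lmin (n i) (A i s) (X i) | i s. i < N \<and> s < S}
        = (\<lambda>(i,s). g i s) ` ({..<N} \<times> {..<S})" unfolding g_def by auto
    have g0: "g 0 0 \<ge> 0"
    proof -
      have x0: "xL 0 \<in> X 0" using xL[OF N_pos] unfolding xL_opt_def by blast
      obtain B where "\<forall>x\<in>X 0. \<forall>k<n 0. \<bar>x k\<bar> \<le> B" using X_bounded[OF N_pos] by blast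
      from lin_bdd(2)[OF this, of "A 0 0"] x0
      have "Lmin (n 0) (A 0 0) (X 0) \<le> lin (n 0) (A 0 0) (xL 0)"
        unfolding Lmin_def by (auto intro: cInf_lower)
      then show ?thesis unfolding g_def by simp
    qed
    have "g 0 0 \<le> Max ((\<lambda>(i,s). g i s) ` ({..<N} \<times> {..<S}))"
      by (rule Max_ge) (use N_pos S_pos in auto)
    then show ?thesis unfolding sigma_ASY_def setq using g0 by simp
  qed
  have r_nn: "r \<ge> 0" using sig_nn delta_pos unfolding r_def by simp
  obtain zs where zs: "LPr_opt N S n c A b X r zs" using assmA unfolding r_def by blast
  interpret mt N S n c A b X r zh zs
    using N_pos S_pos X_bounded MILP_feasible r_nn zs assmC unfolding r_def by unfold_locales auto
  have Gam: "Gamma_bound N n c X (zeta N S n A b r zh) = (1 / zeta N S n A b r zh) * Dsum"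
    unfolding Gamma_bound_def Dsum_def hi_def lo_def ..
  show ?thesis unfolding r_def[symmetric] Gam
  proof (intro exI[of _ "Dsum / zeta N S n A b r zh"] allI impI)
    fix M :: real and \<epsilon> :: "nat \<Rightarrow> real" and y z v \<mu> x
    assume M: "M > Dsum / zeta N S n A b r zh" and eps: "\<forall>i<N. \<epsilon> i > 0"
      and run: "alg_run N S n c A b X Nb r \<alpha> M y z v \<mu> x"
    have M0: "M \<ge> 0" using M Dsum_nn zeta_pos
      by (smt (verit) divide_nonneg_pos)
    have init: "\<forall>s<S. (\<Sum>i<N. y 0 i s) = b s - r"
      and pd: "\<And>t i. i < N \<Longrightarrow> P1_pd_opt (n i) S (c i) (A i) M (X i) (y t i) (z t i) (v t i) (\<mu> t i)"
      and upd: "\<And>t i s. i < N \<Longrightarrow> y (Suc t) i s = y t i s + \<alpha> t * (\<Sum>j\<in>Nb i. \<mu> t i s - \<mu> t j s)"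
      using run unfolding alg_run_def by auto
    have ysum: "\<forall>s<S. (\<Sum>i<N. y t i s) = b s - r" for t
    proof (induction t)
      case 0 then show ?case using init by simp
    next
      case (Suc t)
      show ?case
      proof (intro allI impI)
        fix s assume s: "s < S"
        have "(\<Sum>i<N. y (Suc t) i s) = (\<Sum>i<N. y t i s) + \<alpha> t * (\<Sum>i<N. \<Sum>j\<in>Nb i. \<mu> t i s - \<mu> t j s)"
          using upd by (simp add: sum.distrib sum_distrib_left)
        also have "(\<Sum>i<N. \<Sum>j\<in>Nb i. \<mu> t i s - \<mu> t j s) = 0"
          by (rule lap_sum_zero[OF graph])
        finally show "(\<Sum>i<N. y (Suc t) i s) = b s - r" using Suc s by simp
      qed
    qed
    have feas: "P1_feas (n i) S (A i) (X i) (y t i) (z t i) (v t i)" if "i < N" for t i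
      using pd[OF that, of t] unfolding P1_pd_opt_def by blast
    have mu_nn: "\<mu> t i s \<ge> 0" if "i < N" "s < S" for t i s
      using pd[OF that(1), of t] that(2) unfolding P1_pd_opt_def by blast
    have mu_le: "\<mu> t i s \<le> M" if "i < N" "s < S" for t i s
    proof -
      have "\<mu> t i s \<le> (\<Sum>s<S. \<mu> t i s)"
        by (rule member_le_sum) (use that mu_nn in auto)
      also have "\<dots> \<le> M" by (rule P1_mu_sum[OF S_pos M0 pd[OF that(1)]])
      finally show ?thesis .
    qed
    define F where "F t = (\<Sum>i<N. lin (n i) (c i) (z t i) + M * v t i)" for t
    have F_lb: "Ks \<le> F t" for t
      unfolding F_def by (rule exact_penalty) (use M ysum feas in auto)
    have sub_iter: "F t \<le> F t' + (\<Sum>i<N. \<Sum>s<S. \<mu> t i s * (y t' i s - y t i s))" for t t'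
    proof -
      have "F t \<le> (\<Sum>i<N. lin (n i) (c i) (z t' i) + M * v t' i + (\<Sum>s<S. \<mu> t i s * (y t' i s - y t i s)))"
        unfolding F_def by (intro sum_mono P1_subgrad[OF S_pos M0 pd feas]) auto
      then show ?thesis unfolding F_def by (simp add: sum.distrib)
    qed
    define ys where "ys i s = lin (n i) (A i s) (zs i) + (b s - r - (\<Sum>j<N. lin (n j) (A j s) (zs j))) / real N" for i s
    have ys_sum: "(\<Sum>i<N. ys i s) = (\<Sum>i<N. y 0 i s)" if s: "s < S" for s
    proof -
      have "(\<Sum>i<N. ys i s) = (\<Sum>i<N. lin (n i) (A i s) (zs i)) + real N * ((b s - r - (\<Sum>j<N. lin (n j) (A j s) (zs j))) / real N)"
        unfolding ys_def by (simp add: sum.distrib)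
      also have "\<dots> = b s - r" using N_pos by simp
      finally show ?thesis using init s by simp
    qed
    have ys_feas: "P1_feas (n i) S (A i) (X i) (ys i) (zs i) 0" if i: "i < N" for i
    proof -
      have "lin (n i) (A i s) (zs i) \<le> ys i s + 0" if s: "s < S" for s
      proof -
        have "0 \<le> (b s - r - (\<Sum>j<N. lin (n j) (A j s) (zs j))) / real N"
          using zs_feas(2) s N_pos by simp
        then show ?thesis unfolding ys_def by simp
      qed
      then show ?thesis unfolding P1_feas_def using zs_feas(1) i by auto
    qed
    have ys_good: "F t \<le> Ks + (\<Sum>i<N. \<Sum>s<S. \<mu> t i s * (ys i s - y t i s))" for t
    proof -
      have "F t \<le> (\<Sum>i<N. lin (n i) (c i) (zs i) + M * 0 + (\<Sum>s<S. \<mu> t i s * (ys i s - y t i s)))"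
        unfolding F_def by (intro sum_mono P1_subgrad[OF S_pos M0 pd ys_feas]) auto
      then show ?thesis unfolding Ks_def by (simp add: sum.distrib)
    qed
    interpret sg: sgm N S Nb y \<mu> \<alpha> F Ks M ys
    proof (unfold_locales)
      show "0 < N" by (rule N_pos)
      show "conn_graph N Nb" by (rule graph)
    qed (use upd mu_nn mu_le assmB F_lb sub_iter ys_sum ys_good in auto)
    obtain yl where yl: "\<And>t. F t \<le> Ks + (\<Sum>i<N. \<Sum>s<S. \<mu> t i s * (yl i s - y t i s))"
      "\<And>i s. i < N \<Longrightarrow> s < S \<Longrightarrow> (\<lambda>t. y t i s) \<longlonglongrightarrow> yl i s"
      using sg.conv_main by blast
    have ev: "eventually (\<lambda>t. \<forall>p\<in>{..<N} \<times> {..<S}. \<bar>yl (fst p) (snd p) - y t (fst p) (snd p)\<bar> < \<epsilon> (fst p)) sequentially"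
    proof (rule eventually_ball_finite)
      show "\<forall>p\<in>{..<N} \<times> {..<S}. eventually (\<lambda>t. \<bar>yl (fst p) (snd p) - y t (fst p) (snd p)\<bar> < \<epsilon> (fst p)) sequentially"
      proof
        fix p assume p: "p \<in> {..<N} \<times> {..<S}"
        then have "(\<lambda>t. y t (fst p) (snd p)) \<longlonglongrightarrow> yl (fst p) (snd p)" "\<epsilon> (fst p) > 0"
          using yl(2) eps by auto
        from tendstoD[OF this] show "eventually (\<lambda>t. \<bar>yl (fst p) (snd p) - y t (fst p) (snd p)\<bar> < \<epsilon> (fst p)) sequentially"
          by (simp add: dist_real_def abs_minus_commute)
      qed
    qed simp
    then obtain T0 where T0: "\<And>t. t \<ge> T0 \<Longrightarrow> \<forall>p\<in>{..<N} \<times> {..<S}. \<bar>yl (fst p) (snd p) - y t (fst p) (snd p)\<bar> < \<epsilon> (fst p)"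
      unfolding eventually_sequentially by blast
    show "\<exists>T>0. \<forall>t\<ge>T.
          (\<Sum>i<N. lin (n i) (c i) (x t i)) - J_MILP N S n c A b X
            \<le> (\<Sum>i<N. lin (n i) (c i) (x t i) - (lin (n i) (c i) (z t i) + M * v t i))
              + (\<Sum>i<N. (\<Sum>s<S. \<bar>\<mu> t i s\<bar>) * \<epsilon> i)
              + 1 / zeta N S n A b r zh * Dsum * r"
    proof (intro exI[of _ "Suc T0"] conjI allI impI)
      fix t assume t: "Suc T0 \<le> t"
      have close: "\<bar>yl i s - y t i s\<bar> \<le> \<epsilon> i" if "i < N" "s < S" for i s
      proof -
        have "T0 \<le> t" using t by simp
        then have "\<bar>yl (fst (i,s)) (snd (i,s)) - y t (fst (i,s)) (snd (i,s))\<bar> < \<epsilon> (fst (i,s))"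
          using T0 that by blast
        then show ?thesis by simp
      qed
      have "(\<Sum>i<N. \<Sum>s<S. \<mu> t i s * (yl i s - y t i s)) \<le> (\<Sum>i<N. \<Sum>s<S. \<bar>\<mu> t i s\<bar> * \<epsilon> i)"
      proof (intro sum_mono)
        fix i s assume "i \<in> {..<N}" "s \<in> {..<S}"
        then have "\<bar>yl i s - y t i s\<bar> \<le> \<epsilon> i" using close by auto
        then have "\<bar>\<mu> t i s\<bar> * \<bar>yl i s - y t i s\<bar> \<le> \<bar>\<mu> t i s\<bar> * \<epsilon> i" by (simp add: mult_left_mono)
        moreover have "\<mu> t i s * (yl i s - y t i s) \<le> \<bar>\<mu> t i s\<bar> * \<bar>yl i s - y t i s\<bar>"
          by (metis abs_ge_self abs_mult)
        ultimately show "\<mu> t i s * (yl i s - y t i s) \<le> \<bar>\<mu> t i s\<bar> * \<epsilon> i" by linarith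
      qed
      also have "\<dots> = (\<Sum>i<N. (\<Sum>s<S. \<bar>\<mu> t i s\<bar>) * \<epsilon> i)" by (simp add: sum_distrib_right)
      finally have Fb: "F t \<le> Ks + (\<Sum>i<N. (\<Sum>s<S. \<bar>\<mu> t i s\<bar>) * \<epsilon> i)" using yl(1)[of t] by linarith
      have K: "Ks \<le> J_MILP N S n c A b X + r / zeta N S n A b r zh * Dsum" by (rule Ks_le_MILP)
      have e1: "1 / zeta N S n A b r zh * Dsum * r = r / zeta N S n A b r zh * Dsum" by simp
      have e2: "(\<Sum>i<N. lin (n i) (c i) (x t i) - (lin (n i) (c i) (z t i) + M * v t i))
          = (\<Sum>i<N. lin (n i) (c i) (x t i)) - F t" unfolding F_def by (simp add: sum_subtractf)
      show "(\<Sum>i<N. lin (n i) (c i) (x t i)) - J_MILP N S n c A b X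
            \<le> (\<Sum>i<N. lin (n i) (c i) (x t i) - (lin (n i) (c i) (z t i) + M * v t i))
              + (\<Sum>i<N. (\<Sum>s<S. \<bar>\<mu> t i s\<bar>) * \<epsilon> i)
              + 1 / zeta N S n A b r zh * Dsum * r"
        unfolding e1 e2 using Fb K by linarith
    qed simp
  qed
qed


end
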